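(* Let $V,W$ be finite-dimensional real vector spaces and let $\mathcal{R}=(\mathcal{R}^0,\mathcal{R}^1,\dots)$ be a sequence in $\mathscr{P}(V;W)$. Let $k$ and $a_1,\dots,a_k\in\mathscr{F}(V)$ be as defined in the context. Suppose that $\mathrm{Kern}(\mathrm{Eval}_{\mathcal{R}})$ is an ideal of $\mathscr{P}(V)[\lambda]$. Then $a_i\in\mathscr{P}(V)$ for all $i=1,\dots,k$, that is, $P_{\min}(\mathcal{R})\in\mathscr{P}(V)[\lambda]$.
   Context: $\mathscr{P}(V)$ and $\mathscr{F}(V)$ are the rings of real polynomial and rational functions on $V$. $\mathscr{P}(V;W)$ and $\mathscr{F}(V;W)$ are the modules of $W$-valued polynomial and rational functions. $\mathscr{A}_j(\mathcal{R})=\{X\in V: \mathcal{R}^0(X),\dots,\mathcal{R}^j(X)\text{ linearly dependent in }W\}$. Let $k\ge0$ be the smallest integer with $\mathscr{A}_k(\mathcal{R})=V$. Then $a_1,\dots,a_k\in\mathscr{F}(V)$ are the unique rational functions with $\mathcal{R}^k=-\sum_{i=1}^k a_i\mathcal{R}^{k-i}$ in $\mathscr{F}(V;W)$, and $P_{\min}(\mathcal{R})=\lambda^k+\sum_{i=1}^k a_i\lambda^{k-i}$. $\mathrm{Eval}_{\mathcal{R}}\colon\mathscr{P}(V)[\lambda]\to\mathscr{P}(V;W)$ is the unique $\mathscr{P}(V)$-module homomorphism with $\lambda^i\mapsto\mathcal{R}^i$. *)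

theory Defs
  imports "HOL-Analysis.Analysis" "HOL-Computational_Algebra.Polynomial" "HOL-Library.Function_Algebras"
begin

text \<open>Real polynomial functions on a finite-dimensional real vector space V
 (modelled as a type of class euclidean_space): the smallest class of functions
 containing the constants and the linear functionals and closed under + and *.\<close>
inductive polyfun :: "('v::euclidean_space \<Rightarrow> real) \<Rightarrow> bool" where
  const: "polyfun (\<lambda>_. c)"
| lin: "polyfun (\<lambda>x. x \<bullet> b)"
| add: "polyfun f \<Longrightarrow> polyfun g \<Longrightarrow> polyfun (\<lambda>x. f x + g x)"
| mult: "polyfun f \<Longrightarrow> polyfun g \<Longrightarrow> polyfun (\<lambda>x. f x * g x)"

definition polyfun_vec :: "('v::euclidean_space \<Rightarrow> 'w::euclidean_space) \<Rightarrow> bool" where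
  "polyfun_vec F \<longleftrightarrow> (\<forall>b\<in>Basis. polyfun (\<lambda>x. F x \<bullet> b))"

text \<open>A (real-valued) function represents an element of F(V) if it agrees with
 a quotient p/q of polynomial functions, q not identically zero, wherever q is nonzero.\<close>
definition ratfun :: "('v::euclidean_space \<Rightarrow> real) \<Rightarrow> bool" where
  "ratfun f \<longleftrightarrow> (\<exists>p q. polyfun p \<and> polyfun q \<and> q \<noteq> (\<lambda>_. 0) \<and>
      (\<forall>x. q x \<noteq> 0 \<longrightarrow> f x = p x / q x))"

text \<open>Equality in F(V) (resp. F(V;W)): agreement off the zero set of some nonzero polynomial.\<close>
definition ratfun_eq :: "('v::euclidean_space \<Rightarrow> 'b) \<Rightarrow> ('v \<Rightarrow> 'b) \<Rightarrow> bool" where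
  "ratfun_eq f g \<longleftrightarrow> (\<exists>q. polyfun q \<and> q \<noteq> (\<lambda>_. 0) \<and> (\<forall>x. q x \<noteq> 0 \<longrightarrow> f x = g x))"

definition A_set :: "nat \<Rightarrow> (nat \<Rightarrow> 'v::euclidean_space \<Rightarrow> 'w::euclidean_space) \<Rightarrow> 'v set" where
  "A_set j R = {X. \<exists>c::nat \<Rightarrow> real. (\<exists>i\<le>j. c i \<noteq> 0) \<and> (\<Sum>i\<le>j. c i *\<^sub>R R i X) = 0}"

definition PVlam :: "('v::euclidean_space \<Rightarrow> real) poly set" where
  "PVlam = {c. \<forall>i. polyfun (coeff c i)}"

definition Eval :: "(nat \<Rightarrow> 'v::euclidean_space \<Rightarrow> 'w::real_vector) \<Rightarrow> ('v \<Rightarrow> real) poly \<Rightarrow> ('v \<Rightarrow> 'w)" where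
  "Eval R c = (\<lambda>x. \<Sum>i\<le>degree c. coeff c i x *\<^sub>R R i x)"

definition Kern_Eval :: "(nat \<Rightarrow> 'v::euclidean_space \<Rightarrow> 'w::real_vector) \<Rightarrow> ('v \<Rightarrow> real) poly set" where
  "Kern_Eval R = {c \<in> PVlam. Eval R c = (\<lambda>_. 0)}"

definition is_ideal_PVlam :: "('v::euclidean_space \<Rightarrow> real) poly set \<Rightarrow> bool" where
  "is_ideal_PVlam I \<longleftrightarrow> I \<subseteq> PVlam \<and> 0 \<in> I \<and> (\<forall>c\<in>I. \<forall>d\<in>I. c + d \<in> I) \<and>
     (\<forall>c\<in>I. \<forall>d\<in>PVlam. d * c \<in> I)"

end

theory Submission
  imports Defs "HOL-Complex_Analysis.Complex_Analysis" "Jordan_Normal_Form.Char_Poly"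
begin

interpretation ofr: map_poly_comm_ring_hom "of_real :: real \<Rightarrow> complex" ..

lemma polyfun_neg: "polyfun f \<Longrightarrow> polyfun (\<lambda>x. - f x)"
  using polyfun.mult[OF polyfun.const[of "-1"], of f] by simp

lemma polyfun_diff: "polyfun f \<Longrightarrow> polyfun g \<Longrightarrow> polyfun (\<lambda>x. f x - g x)"
  using polyfun.add[OF _ polyfun_neg] by simp

lemma polyfun_sum: "(\<And>i. i \<in> A \<Longrightarrow> polyfun (f i)) \<Longrightarrow> polyfun (\<lambda>x. \<Sum>i\<in>A. f i x)"
proof (induction A rule: infinite_finite_induct)
  case (infinite A) then show ?case by (simp add: polyfun.const)
next
  case empty then show ?case by (simp add: polyfun.const)
next
  case (insert a A) then show ?case by (simp add: polyfun.add)
qed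

lemma polyfun_prod: "(\<And>i. i \<in> A \<Longrightarrow> polyfun (f i)) \<Longrightarrow> polyfun (\<lambda>x. \<Prod>i\<in>A. f i x)"
proof (induction A rule: infinite_finite_induct)
  case (infinite A) then show ?case by (simp add: polyfun.const)
next
  case empty then show ?case by (simp add: polyfun.const)
next
  case (insert a A) then show ?case by (simp add: polyfun.mult)
qed

lemma polyfun_scale: "polyfun f \<Longrightarrow> polyfun (\<lambda>x. c * f x)"
  using polyfun.mult[OF polyfun.const] by blast

lemma polyfun_inner: "polyfun_vec F \<Longrightarrow> polyfun (\<lambda>x. F x \<bullet> u)"
proof -
  assume "polyfun_vec F"
  then have "\<And>b. b \<in> Basis \<Longrightarrow> polyfun (\<lambda>x. (F x \<bullet> b) * (u \<bullet> b))"
    unfolding polyfun_vec_def by (auto intro: polyfun.mult polyfun.const)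
  then have "polyfun (\<lambda>x. \<Sum>b\<in>Basis. (F x \<bullet> b) * (u \<bullet> b))" by (rule polyfun_sum)
  then show ?thesis by (simp add: euclidean_inner[symmetric])
qed

lemma polyfun_cont: "polyfun f \<Longrightarrow> continuous_on UNIV f"
  by (induction rule: polyfun.induct) (auto intro!: continuous_intros)

section \<open>Polynomials with function coefficients\<close>

lemma sum_fun_app: "(\<Sum>i\<in>A. f i) (x::'a) = (\<Sum>i\<in>A. f i x)"
  by (induction A rule: infinite_finite_induct) auto

lemma sum_fun_eq: "(\<Sum>i\<in>A. f i) = (\<lambda>x::'a. \<Sum>i\<in>A. f i x)"
  by (rule ext) (rule sum_fun_app)

lemma prod_fun_app: "(\<Prod>i\<in>A. f i) (x::'a) = (\<Prod>i\<in>A. f i x)"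
  by (induction A rule: infinite_finite_induct) auto

definition evx :: "'a \<Rightarrow> ('a \<Rightarrow> real) poly \<Rightarrow> real poly" where
  "evx x p = map_poly (\<lambda>c. c x) p"

lemma coeff_evx [simp]: "coeff (evx x p) n = coeff p n x"
  unfolding evx_def by (subst coeff_map_poly) auto

lemma evx_add [simp]: "evx x (p + q) = evx x p + evx x q"
  by (rule poly_eqI) simp

lemma evx_diff [simp]: "evx x (p - q) = evx x p - evx x q"
  by (rule poly_eqI) simp

lemma evx_mult [simp]: "evx x (p * q) = evx x p * evx x q"
  by (rule poly_eqI) (simp add: coeff_mult sum_fun_app)

lemma evx_0 [simp]: "evx x 0 = 0"
  by (rule poly_eqI) simp

lemma evx_monom [simp]: "evx x (monom c n) = monom (c x) n"
  by (rule poly_eqI) (simp add: coeff_monom)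

lemma evx_pCons [simp]: "evx x (pCons c p) = pCons (c x) (evx x p)"
  by (rule poly_eqI) (simp add: coeff_pCons split: nat.split)

lemma degree_evx_le: "degree (evx x p) \<le> degree p"
  by (rule degree_le) (simp add: coeff_eq_0)

lemma PVlam_add: "p \<in> PVlam \<Longrightarrow> q \<in> PVlam \<Longrightarrow> p + q \<in> PVlam"
  unfolding PVlam_def by (auto simp: plus_fun_def intro: polyfun.add)

lemma PVlam_diff: "p \<in> PVlam \<Longrightarrow> q \<in> PVlam \<Longrightarrow> p - q \<in> PVlam"
  unfolding PVlam_def by (auto simp: fun_diff_def intro: polyfun_diff)

lemma PVlam_mult: "p \<in> PVlam \<Longrightarrow> q \<in> PVlam \<Longrightarrow> p * q \<in> PVlam"
proof -
  assume "p \<in> PVlam" "q \<in> PVlam"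
  then have "polyfun (\<lambda>x. \<Sum>i\<le>n. coeff p i x * coeff q (n - i) x)" for n
    unfolding PVlam_def by (auto intro!: polyfun_sum polyfun.mult)
  then show ?thesis
    unfolding PVlam_def by (simp add: coeff_mult sum_fun_eq times_fun_def)
qed

lemma PVlam_const: "[:c:] \<in> PVlam \<longleftrightarrow> polyfun c"
  unfolding PVlam_def by (auto simp: coeff_pCons split: nat.split intro: polyfun.const[of 0, simplified zero_fun_def[symmetric]])

lemma polyfun_zero: "polyfun 0"
  using polyfun.const[of 0] by (simp add: zero_fun_def)

lemma polyfun_constf: "polyfun (\<lambda>_. c)"
  by (rule polyfun.const)

section \<open>Degree-bounded polynomial functions\<close>

inductive polyfun_le :: "nat \<Rightarrow> ('v::euclidean_space \<Rightarrow> real) \<Rightarrow> bool" where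
  c: "polyfun_le n (\<lambda>_. c)"
| l: "1 \<le> n \<Longrightarrow> polyfun_le n (\<lambda>x. x \<bullet> b)"
| a: "polyfun_le n f \<Longrightarrow> polyfun_le n g \<Longrightarrow> polyfun_le n (\<lambda>x. f x + g x)"
| m: "polyfun_le n f \<Longrightarrow> polyfun_le m g \<Longrightarrow> n + m \<le> N \<Longrightarrow> polyfun_le N (\<lambda>x. f x * g x)"

lemma polyfun_le_mono: "polyfun_le N f \<Longrightarrow> N \<le> M \<Longrightarrow> polyfun_le M f"
proof (induction arbitrary: M rule: polyfun_le.induct)
  case (m n f m g N)
  have "n + m \<le> M" using m by linarith
  then show ?case using m(1,2) by (rule polyfun_le.m[rotated 2])
qed (auto intro: polyfun_le.intros)

lemma polyfun_le_polyfun: "polyfun_le N f \<Longrightarrow> polyfun f"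
  by (induction rule: polyfun_le.induct) (auto intro: polyfun.intros)

lemma polyfun_ex_le: "polyfun f \<Longrightarrow> \<exists>N. polyfun_le N f"
proof (induction rule: polyfun.induct)
  case (const c) then show ?case by (auto intro: polyfun_le.c)
next
  case (lin b) then show ?case by (auto intro: polyfun_le.l)
next
  case (add f g)
  then obtain n m where "polyfun_le n f" "polyfun_le m g" by blast
  then have "polyfun_le (max n m) f" "polyfun_le (max n m) g" by (auto intro: polyfun_le_mono)
  then show ?case by (blast intro: polyfun_le.a)
next
  case (mult f g)
  then show ?case by (blast intro: polyfun_le.m)
qed

lemma polyfun_le_sum: "(\<And>i. i \<in> A \<Longrightarrow> polyfun_le N (f i)) \<Longrightarrow> polyfun_le N (\<lambda>x. \<Sum>i\<in>A. f i x)"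
proof (induction A rule: infinite_finite_induct)
  case (infinite A) then show ?case by (simp add: polyfun_le.c)
next
  case empty then show ?case by (simp add: polyfun_le.c)
next
  case (insert a A) then show ?case by (simp add: polyfun_le.a)
qed

lemma coeff_mult_le_deg:
  fixes p q :: "'a::comm_semiring_0 poly"
  assumes "degree p \<le> n" "degree q \<le> m"
  shows "coeff (p * q) (n + m) = coeff p n * coeff q m"
proof -
  have "coeff (p * q) (n + m) = (\<Sum>i\<le>n+m. coeff p i * coeff q (n + m - i))"
    by (rule coeff_mult)
  also have "\<dots> = (\<Sum>i\<in>{n}. coeff p i * coeff q (n + m - i))"
  proof (rule sum.mono_neutral_right)
    show "\<forall>i\<in>{..n + m} - {n}. coeff p i * coeff q (n + m - i) = 0"
    proof
      fix i assume i: "i \<in> {..n + m} - {n}"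
      show "coeff p i * coeff q (n + m - i) = 0"
      proof (cases "i < n")
        case True
        then have "degree q < n + m - i" using assms(2) by linarith
        then show ?thesis by (simp add: coeff_eq_0)
      next
        case False
        then have "degree p < i" using assms(1) i by auto
        then show ?thesis by (simp add: coeff_eq_0)
      qed
    qed
  qed auto
  finally show ?thesis by simp
qed

lemma line_rep:
  fixes v :: "'v::euclidean_space"
  assumes "polyfun_le N f"
  shows "\<exists>C. C \<in> PVlam \<and> degree C \<le> N \<and> (\<forall>x t. f (x + t *\<^sub>R v) = poly (evx x C) t) \<and>
      (\<exists>\<gamma>. coeff C N = (\<lambda>_. \<gamma>))"
  using assms
proof (induction rule: polyfun_le.induct)
  case (c n c)
  show ?case
  proof (intro exI conjI)
    show "[:\<lambda>_. c:] \<in> PVlam" by (simp add: PVlam_const polyfun.const)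
    show "coeff [:\<lambda>_. c:] n = (\<lambda>_. if n = 0 then c else 0)"
      by (auto simp: coeff_pCons split: nat.split)
  qed auto
next
  case (l n b)
  let ?C = "[:\<lambda>x. x \<bullet> b, \<lambda>_. v \<bullet> b:]"
  show ?case
  proof (intro exI conjI allI)
    show "?C \<in> PVlam" unfolding PVlam_def
      by (auto simp: coeff_pCons polyfun_zero split: nat.split intro: polyfun.intros)
    show "degree ?C \<le> n" using l by (auto intro: order.trans[OF degree_pCons_le])
    fix x t show "(x + t *\<^sub>R v) \<bullet> b = poly (evx x ?C) t"
      by (simp add: inner_add_left algebra_simps)
  next
    show "coeff ?C n = (\<lambda>_. if n = 1 then v \<bullet> b else 0)"
      using l by (auto simp: coeff_pCons split: nat.split)
  qed
next
  case (a n f g)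
  then obtain C1 C2 g1 g2 where C: "C1 \<in> PVlam" "degree C1 \<le> n" "\<forall>x t. f (x + t *\<^sub>R v) = poly (evx x C1) t"
     "coeff C1 n = (\<lambda>_. g1)" "C2 \<in> PVlam" "degree C2 \<le> n" "\<forall>x t. g (x + t *\<^sub>R v) = poly (evx x C2) t"
     "coeff C2 n = (\<lambda>_. g2)" by blast
  show ?case
  proof (intro exI conjI allI)
    show "C1 + C2 \<in> PVlam" using C by (simp add: PVlam_add)
    show "degree (C1 + C2) \<le> n" using C by (simp add: degree_add_le)
    show "coeff (C1 + C2) n = (\<lambda>_. g1 + g2)" using C by (simp add: plus_fun_def)
  qed (use C in auto)
next
  case (m n f m g N)
  then obtain C1 C2 g1 g2 where C: "C1 \<in> PVlam" "degree C1 \<le> n" "\<forall>x t. f (x + t *\<^sub>R v) = poly (evx x C1) t"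
     "coeff C1 n = (\<lambda>_. g1)" "C2 \<in> PVlam" "degree C2 \<le> m" "\<forall>x t. g (x + t *\<^sub>R v) = poly (evx x C2) t"
     "coeff C2 m = (\<lambda>_. g2)" by blast
  have dg: "degree (C1 * C2) \<le> N" using C m(3) by (meson degree_mult_le le_trans add_le_mono)
  show ?case
  proof (intro exI conjI allI)
    show "C1 * C2 \<in> PVlam" using C by (simp add: PVlam_mult)
    show "degree (C1 * C2) \<le> N" by (rule dg)
    show "coeff (C1 * C2) N = (\<lambda>_. if N = n + m then g1 * g2 else 0)"
    proof (cases "N = n + m")
      case True
      then show ?thesis using C by (simp add: coeff_mult_le_deg times_fun_def)
    next
      case False
      have "degree (C1 * C2) \<le> n + m" using C by (meson degree_mult_le le_trans add_le_mono)
      then have "degree (C1 * C2) < N" using False m(3) by linarith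
      then show ?thesis using False by (simp add: coeff_eq_0 zero_fun_def)
    qed
  qed (use C in auto)
qed

lemma line_poly:
  fixes v x :: "'v::euclidean_space"
  assumes "polyfun f"
  shows "\<exists>p. \<forall>t. f (x + t *\<^sub>R v) = poly p t"
proof -
  obtain N where "polyfun_le N f" using polyfun_ex_le[OF assms] by blast
  from line_rep[OF this, of v] show ?thesis by blast
qed

lemma polyfun_zero_ext:
  fixes f q :: "'v::euclidean_space \<Rightarrow> real"
  assumes f: "polyfun f" and q: "polyfun q" "q \<noteq> (\<lambda>_. 0)" and fq: "\<And>x. q x \<noteq> 0 \<Longrightarrow> f x = 0"
  shows "f y = 0"
proof -
  obtain x0 where x0: "q x0 \<noteq> 0" using q(2) by auto
  have "continuous_on UNIV q" by (rule polyfun_cont[OF q(1)])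
  then have "isCont q x0" by (simp add: continuous_on_eq_continuous_at)
  then obtain e where e: "e > 0" "\<And>x. dist x x0 < e \<Longrightarrow> dist (q x) (q x0) < \<bar>q x0\<bar>"
    using x0 unfolding continuous_at_eps_delta by (metis zero_less_abs_iff)
  have qne: "q x \<noteq> 0" if "dist x x0 < e" for x
    using e(2)[OF that] by (auto simp: dist_real_def)
  obtain p where p: "\<And>t. f (x0 + t *\<^sub>R (y - x0)) = poly p t"
    using line_poly[OF f, of x0 "y - x0"] by blast
  define r where "r = e / (norm (y - x0) + 1)"
  have r: "r > 0" using e(1) unfolding r_def by (intro divide_pos_pos) (auto intro: add_nonneg_pos)
  have "{-r<..<r} \<subseteq> {t. poly p t = 0}"
  proof
    fix t assume "t \<in> {-r<..<r}"
    then have t: "\<bar>t\<bar> < r" by auto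
    have "\<bar>t\<bar> * norm (y - x0) \<le> \<bar>t\<bar> * (norm (y - x0) + 1)" by (simp add: mult_left_mono)
    also have "\<dots> < r * (norm (y - x0) + 1)"
      using t by (intro mult_strict_right_mono) (auto intro: add_nonneg_pos)
    also have "\<dots> = e"
    proof -
      have "norm (y - x0) + 1 > 0" by (simp add: add_nonneg_pos)
      then show ?thesis unfolding r_def by simp
    qed
    finally have "dist (x0 + t *\<^sub>R (y - x0)) x0 < e" by (simp add: dist_norm)
    then have "f (x0 + t *\<^sub>R (y - x0)) = 0" using fq qne by blast
    then show "t \<in> {t. poly p t = 0}" using p by simp
  qed
  moreover have "infinite {-r<..<r}" using r by simp
  ultimately have "p = 0" using poly_roots_finite finite_subset by blast
  then show ?thesis using p[of 1] by simp
qed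

lemma polyfun_mult_nonzero:
  fixes f g :: "'v::euclidean_space \<Rightarrow> real"
  assumes "polyfun f" "polyfun g" "f \<noteq> (\<lambda>_. 0)" "g \<noteq> (\<lambda>_. 0)"
  shows "(\<lambda>x. f x * g x) \<noteq> (\<lambda>_. 0)"
proof
  assume h: "(\<lambda>x. f x * g x) = (\<lambda>_. 0)"
  have "g y = 0" for y
    by (rule polyfun_zero_ext[OF assms(2,1,3)]) (use h in \<open>metis mult_eq_0_iff\<close>)
  then show False using assms(4) by auto
qed

lemma polyfun_prod_nonzero:
  fixes f :: "'i \<Rightarrow> 'v::euclidean_space \<Rightarrow> real"
  assumes "finite A" "\<And>i. i \<in> A \<Longrightarrow> polyfun (f i)" "\<And>i. i \<in> A \<Longrightarrow> f i \<noteq> (\<lambda>_. 0)"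
  shows "(\<lambda>x. \<Prod>i\<in>A. f i x) \<noteq> (\<lambda>_. 0)"
  using assms
proof (induction A rule: finite_induct)
  case empty then show ?case by (simp add: fun_eq_iff)
next
  case (insert a A)
  have "(\<lambda>x. f a x * (\<Prod>i\<in>A. f i x)) \<noteq> (\<lambda>_. 0)"
    by (rule polyfun_mult_nonzero) (use insert in \<open>auto intro: polyfun_prod\<close>)
  then show ?case using insert by simp
qed

lemma polyfun_le_zero: "polyfun_le n 0"
  using polyfun_le.c[of n 0] by (simp add: zero_fun_def)

lemma coeff_const_if: "coeff [:a:] l = (if l = 0 then a else 0)"
  by (cases l) auto

lemma poly_sum_le: "degree p \<le> N \<Longrightarrow> poly p x = (\<Sum>i\<le>N. coeff p i * x ^ i)"
  for x :: "'a::{comm_semiring_0,semiring_1}"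
  unfolding poly_altdef
  by (rule sum.mono_neutral_left) (auto simp: coeff_eq_0 not_le)

lemma scale_rep:
  fixes f :: "'v::euclidean_space \<Rightarrow> real"
  assumes "polyfun_le N f"
  shows "\<exists>H. degree H \<le> N \<and> (\<forall>l. polyfun_le l (coeff H l)) \<and> (\<forall>s x. f (s *\<^sub>R x) = poly (evx x H) s)"
  using assms
proof (induction rule: polyfun_le.induct)
  case (c n c)
  show ?case
    by (rule exI[of _ "[:\<lambda>_. c:]"]) (auto simp: coeff_const_if polyfun_le_zero polyfun_le.c)
next
  case (l n b)
  have "polyfun_le i (coeff [:0, \<lambda>x. x \<bullet> b:] i)" for i
    by (cases i) (auto simp: coeff_const_if polyfun_le_zero polyfun_le.l)
  then show ?case using l
    by (intro exI[of _ "[:0, \<lambda>x. x \<bullet> b:]"]) (auto intro: order.trans[OF degree_pCons_le])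
next
  case (a n f g)
  then obtain H1 H2 where H: "degree H1 \<le> n" "\<forall>l. polyfun_le l (coeff H1 l)" "\<forall>s x. f (s *\<^sub>R x) = poly (evx x H1) s"
    "degree H2 \<le> n" "\<forall>l. polyfun_le l (coeff H2 l)" "\<forall>s x. g (s *\<^sub>R x) = poly (evx x H2) s" by blast
  show ?case
  proof (intro exI[of _ "H1 + H2"] conjI allI)
    show "degree (H1 + H2) \<le> n" using H by (simp add: degree_add_le)
    fix l show "polyfun_le l (coeff (H1 + H2) l)"
      using H by (simp add: plus_fun_def polyfun_le.a)
  qed (use H in auto)
next
  case (m n f m g N)
  then obtain H1 H2 where H: "degree H1 \<le> n" "\<forall>l. polyfun_le l (coeff H1 l)" "\<forall>s x. f (s *\<^sub>R x) = poly (evx x H1) s"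
    "degree H2 \<le> m" "\<forall>l. polyfun_le l (coeff H2 l)" "\<forall>s x. g (s *\<^sub>R x) = poly (evx x H2) s" by blast
  show ?case
  proof (intro exI[of _ "H1 * H2"] conjI allI)
    show "degree (H1 * H2) \<le> N" using H m(3) by (meson degree_mult_le le_trans add_le_mono)
    fix l
    have "polyfun_le l (\<lambda>x. \<Sum>i\<le>l. coeff H1 i x * coeff H2 (l - i) x)"
      by (rule polyfun_le_sum) (use H in \<open>auto intro: polyfun_le.m\<close>)
    then show "polyfun_le l (coeff (H1 * H2) l)"
      by (simp add: coeff_mult sum_fun_eq times_fun_def)
  qed (use H in auto)
qed

lemma good_dir:
  fixes D :: "'v::euclidean_space \<Rightarrow> real"
  assumes D: "polyfun D" "D \<noteq> (\<lambda>_. 0)"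
  shows "\<exists>v C \<gamma>. C \<in> PVlam \<and> (\<forall>x t. D (x + t *\<^sub>R v) = poly (evx x C) t) \<and> \<gamma> \<noteq> 0 \<and> lead_coeff C = (\<lambda>_. \<gamma>)"
proof -
  define N where "N = (LEAST N. polyfun_le N D)"
  have leN: "polyfun_le N D" unfolding N_def using polyfun_ex_le[OF D(1)] by (rule LeastI_ex)
  obtain H where H: "degree H \<le> N" "\<forall>l. polyfun_le l (coeff H l)" "\<forall>s x. D (s *\<^sub>R x) = poly (evx x H) s"
    using scale_rep[OF leN] by blast
  have Dsum: "D x = (\<Sum>l\<le>N. coeff H l x)" for x
  proof -
    have "D x = poly (evx x H) 1" using H(3)[rule_format, of 1 x] by simp
    also have "\<dots> = (\<Sum>l\<le>N. coeff H l x)"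
      by (subst poly_sum_le[of _ N]) (auto intro: order.trans[OF degree_evx_le] H(1))
    finally show ?thesis .
  qed
  have "\<exists>v. coeff H N v \<noteq> 0"
  proof (rule ccontr)
    assume "\<not> ?thesis"
    then have z: "coeff H N v = 0" for v by blast
    show False
    proof (cases N)
      case 0
      then have "D x = 0" for x using Dsum[of x] z[of x] by simp
      then show False using D(2) by auto
    next
      case (Suc M)
      then have "D x = (\<Sum>l\<le>M. coeff H l x)" for x using Dsum[of x] z[of x] by simp
      then have "D = (\<lambda>x. \<Sum>l\<le>M. coeff H l x)" by auto
      moreover have "polyfun_le M (\<lambda>x. \<Sum>l\<le>M. coeff H l x)"
        by (rule polyfun_le_sum) (use H(2) in \<open>auto intro: polyfun_le_mono\<close>)
      ultimately have "polyfun_le M D" by simp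
      moreover have "M < N" using Suc by simp
      ultimately show False unfolding N_def using not_less_Least by blast
    qed
  qed
  then obtain v where v: "coeff H N v \<noteq> 0" by blast
  obtain C \<gamma> where C: "C \<in> PVlam" "degree C \<le> N" "\<forall>x t. D (x + t *\<^sub>R v) = poly (evx x C) t"
    "coeff C N = (\<lambda>_. \<gamma>)" using line_rep[OF leN, of v] by blast
  have "poly (evx 0 C) = poly (evx v H)"
  proof
    fix t show "poly (evx 0 C) t = poly (evx v H) t"
      using C(3)[rule_format, of 0 t] H(3)[rule_format, of t v] by simp
  qed
  then have "evx 0 C = evx v H" by (simp add: poly_eq_poly_eq_iff)
  then have "coeff (evx 0 C) N = coeff (evx v H) N" by simp
  then have g: "\<gamma> = coeff H N v" using C(4) by simp
  then have "\<gamma> \<noteq> 0" using v by simp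
  then have "coeff C N \<noteq> 0" using C(4) by (auto simp: fun_eq_iff)
  then have "N \<le> degree C" by (rule le_degree)
  then have "degree C = N" using C(2) by simp
  then have "lead_coeff C = (\<lambda>_. \<gamma>)" using C(4) by simp
  then show ?thesis using C(1,3) \<open>\<gamma> \<noteq> 0\<close> by blast
qed

lemma fdiv:
  fixes F G :: "('v::euclidean_space \<Rightarrow> real) poly"
  assumes "F \<in> PVlam" "G \<in> PVlam" "lead_coeff G = (\<lambda>_. \<gamma>)" "\<gamma> \<noteq> 0"
  shows "\<exists>Q Rm. Q \<in> PVlam \<and> Rm \<in> PVlam \<and> F = Q * G + Rm \<and> (Rm = 0 \<or> degree Rm < degree G)"
  using assms(1)
proof (induction "degree F" arbitrary: F rule: less_induct)
  case less
  show ?case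
  proof (cases "F = 0 \<or> degree F < degree G")
    case True
    then show ?thesis using less(2) by (intro exI[of _ 0] exI[of _ F]) (auto simp: PVlam_def polyfun_zero)
  next
    case False
    then have F0: "F \<noteq> 0" and dFG: "degree G \<le> degree F" by auto
    define d where "d = degree F - degree G"
    define c where "c = lead_coeff F"
    define M where "M = monom (\<lambda>x. c x / \<gamma>) d"
    define F' where "F' = F - M * G"
    have cp: "polyfun c" using less(2) unfolding c_def PVlam_def by blast
    have MP: "M \<in> PVlam" unfolding M_def PVlam_def
      by (auto simp: coeff_monom polyfun_zero intro: polyfun_scale[OF cp, of "1/\<gamma>", simplified])
    have cMG: "coeff (M * G) (degree F) = c"
    proof -
      have "coeff (M * G) (degree F) = (\<lambda>x. c x / \<gamma>) * coeff G (degree G)"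
        unfolding M_def coeff_monom_mult using dFG by (simp add: d_def)
      also have "\<dots> = c" using assms(3,4) by (simp add: times_fun_def)
      finally show ?thesis .
    qed
    have dMG: "degree (M * G) \<le> degree F"
      using degree_mult_le[of M G] degree_monom_le[of "\<lambda>x. c x / \<gamma>" d] dFG unfolding M_def d_def by linarith
    have dF': "degree F' \<le> degree F" unfolding F'_def using dMG by (meson degree_diff_le le_refl)
    have cF': "coeff F' (degree F) = 0" unfolding F'_def using cMG by (simp add: c_def)
    have F'P: "F' \<in> PVlam" unfolding F'_def by (intro PVlam_diff PVlam_mult less(2) MP assms(2))
    show ?thesis
    proof (cases "F' = 0")
      case True
      then have "F = M * G + 0" unfolding F'_def by simp
      then show ?thesis using MP by (auto simp: PVlam_def polyfun_zero)
    next
      case False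
      then have "degree F' \<noteq> degree F" using cF' leading_coeff_0_iff by metis
      then have "degree F' < degree F" using dF' by simp
      then obtain Q Rm where Q: "Q \<in> PVlam" "Rm \<in> PVlam" "F' = Q * G + Rm" "Rm = 0 \<or> degree Rm < degree G"
        using less(1) F'P by blast
      have "F = (Q + M) * G + Rm" using Q(3) unfolding F'_def by (simp add: algebra_simps)
      then show ?thesis using Q MP PVlam_add by blast
    qed
  qed
qed

lemma line_div_global:
  fixes P Q \<delta> :: "'v::euclidean_space \<Rightarrow> real"
  assumes P: "polyfun P" and Q: "polyfun Q" "Q \<noteq> (\<lambda>_. 0)" and d: "polyfun \<delta>" "\<delta> \<noteq> (\<lambda>_. 0)"
    and H: "\<And>x v Pl Ql. \<delta> x \<noteq> 0 \<Longrightarrow> (\<forall>t. P (x + t *\<^sub>R v) = poly Pl t) \<Longrightarrow>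
              (\<forall>t. Q (x + t *\<^sub>R v) = poly Ql t) \<Longrightarrow>
              map_poly complex_of_real Ql dvd map_poly complex_of_real Pl"
  shows "\<exists>g. polyfun g \<and> (\<forall>y. P y = Q y * g y)"
proof -
  obtain v C \<gamma> where C: "C \<in> PVlam" "\<forall>x t. Q (x + t *\<^sub>R v) = poly (evx x C) t" "\<gamma> \<noteq> 0"
    "lead_coeff C = (\<lambda>_. \<gamma>)" using good_dir[OF Q] by blast
  obtain N where "polyfun_le N P" using polyfun_ex_le[OF P] by blast
  then obtain F where F: "F \<in> PVlam" "\<forall>x t. P (x + t *\<^sub>R v) = poly (evx x F) t"
    using line_rep[of N P v] by blast
  obtain Qt Rm where D: "Qt \<in> PVlam" "Rm \<in> PVlam" "F = Qt * C + Rm" "Rm = 0 \<or> degree Rm < degree C"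
    using fdiv[OF F(1) C(1) C(4,3)] by blast
  have Rz: "coeff Rm n x = 0" if dx: "\<delta> x \<noteq> 0" for n x
  proof -
    let ?m = "map_poly complex_of_real"
    have dv: "?m (evx x C) dvd ?m (evx x F)" using H[OF dx] F(2) C(2) by blast
    have "evx x F = evx x Qt * evx x C + evx x Rm" using D(3) by simp
    then have "?m (evx x F) = ?m (evx x Qt) * ?m (evx x C) + ?m (evx x Rm)"
      by (simp add: ofr.hom_add ofr.hom_mult)
    with dv have dv2: "?m (evx x C) dvd ?m (evx x Rm)"
      by (metis dvd_add_right_iff dvd_triv_right)
    have degC: "degree (?m (evx x C)) = degree C"
    proof -
      have "degree (?m (evx x C)) = degree (evx x C)" by (rule degree_map_poly) (simp del: coeff_evx)
      moreover have "coeff (evx x C) (degree C) = \<gamma>" using C(4) by simp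
      then have "degree C \<le> degree (evx x C)" using C(3) le_degree by metis
      ultimately show ?thesis using degree_evx_le[of x C] by simp
    qed
    have "?m (evx x Rm) = 0"
    proof (rule ccontr)
      assume nz: "?m (evx x Rm) \<noteq> 0"
      then have "degree C \<le> degree (?m (evx x Rm))" using dvd_imp_degree_le[OF dv2 nz] degC by simp
      also have "\<dots> = degree (evx x Rm)" by (rule degree_map_poly) (simp del: coeff_evx)
      also have "\<dots> \<le> degree Rm" by (rule degree_evx_le)
      finally have "degree C \<le> degree Rm" .
      moreover have "Rm \<noteq> 0" using nz by auto
      ultimately show False using D(4) by simp
    qed
    then have "coeff (?m (evx x Rm)) n = 0" by simp
    then show ?thesis by (simp add: coeff_map_poly)
  qed
  have Rz2: "coeff Rm n y = 0" for n y
  proof (rule polyfun_zero_ext[OF _ d])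
    show "polyfun (coeff Rm n)" using D(2) unfolding PVlam_def by blast
  qed (use Rz in blast)
  have "evx y Rm = 0" for y by (rule poly_eqI) (simp add: Rz2)
  then have "P y = Q y * coeff Qt 0 y" for y
  proof -
    have e1: "P y = poly (evx y F) 0" using F(2)[rule_format, of y 0] by simp
    have e2: "Q y = poly (evx y C) 0" using C(2)[rule_format, of y 0] by simp
    have e3: "poly (evx y Qt) 0 = coeff Qt 0 y" by (simp add: poly_0_coeff_0)
    have "evx y F = evx y Qt * evx y C" using D(3) \<open>evx y Rm = 0\<close> by simp
    then show ?thesis using e1 e2 e3 by simp
  qed
  moreover have "polyfun (coeff Qt 0)" using D(1) unfolding PVlam_def by blast
  ultimately show ?thesis by blast
qed

section \<open>Univariate complex lemmas\<close>

lemma poly_root_exists: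
  fixes e :: "complex poly"
  assumes "degree e > 0"
  shows "\<exists>z. poly e z = 0"
  using fundamental_theorem_of_algebra constant_degree assms by (metis less_irrefl)

lemma cont_eps:
  fixes p :: "complex poly"
  assumes "r > 0"
  shows "\<exists>d>0. \<forall>t. cmod (t - zz) < d \<longrightarrow> cmod (poly p t - poly p zz) < r"
proof -
  have "isCont (\<lambda>x. poly p x) zz" by simp
  then show ?thesis using assms unfolding continuous_at_eps_delta by (simp add: dist_norm)
qed

lemma bounded_ratio_dvd:
  fixes e p :: "complex poly"
  assumes "e \<noteq> 0"
    and "\<And>t0. poly e t0 = 0 \<Longrightarrow> \<exists>\<epsilon>>0. \<exists>M. \<forall>t. 0 < cmod (t - t0) \<and> cmod (t - t0) < \<epsilon> \<and> poly e t \<noteq> 0 \<longrightarrow>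
               cmod (poly p t / poly e t) \<le> M"
  shows "e dvd p"
  using assms
proof (induction "degree e" arbitrary: e p rule: less_induct)
  case less
  show ?case
  proof (cases "degree e = 0")
    case True
    then have "is_unit e" using less(2) by (simp add: is_unit_iff_degree)
    then show ?thesis by (rule unit_imp_dvd)
  next
    case False
    then obtain t0 where t0: "poly e t0 = 0" using poly_root_exists by blast
    obtain \<epsilon> M where eM: "\<epsilon> > 0" "\<And>t. 0 < cmod (t - t0) \<Longrightarrow> cmod (t - t0) < \<epsilon> \<Longrightarrow> poly e t \<noteq> 0 \<Longrightarrow>
        cmod (poly p t / poly e t) \<le> M" using less(3)[OF t0] by blast
    have pt0: "poly p t0 = 0"
    proof (rule ccontr)
      assume nz: "poly p t0 \<noteq> 0"
      define a where "a = cmod (poly p t0)"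
      have a: "a > 0" using nz by (simp add: a_def)
      define b where "b = a / (2 * (\<bar>M\<bar> + 1))"
      have b: "b > 0" using a by (simp add: b_def add_pos_nonneg)
      obtain d1 where d1: "d1 > 0" "\<And>t. cmod (t - t0) < d1 \<Longrightarrow> cmod (poly p t - poly p t0) < a / 2"
        using cont_eps[where r="a/2" and p=p and zz=t0] a by auto
      obtain d2 where d2: "d2 > 0" "\<And>t. cmod (t - t0) < d2 \<Longrightarrow> cmod (poly e t - poly e t0) < b"
        using cont_eps[where r=b and p=e and zz=t0] b by auto
      have fin: "finite {z. poly e z = 0}" using less(2) by (rule poly_roots_finite)
      obtain d3 where d3: "d3 > 0" "\<And>z. z \<in> {z. poly e z = 0} \<Longrightarrow> z \<noteq> t0 \<Longrightarrow> d3 \<le> dist t0 z"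
        using finite_set_avoid[OF fin, of t0] by blast
      define r where "r = Min {d1, d2, d3, \<epsilon>} / 2"
      have r: "r > 0" "r < d1" "r < d2" "r < d3" "r < \<epsilon>" using d1 d2 d3 eM(1) by (auto simp: r_def)
      define t where "t = t0 + of_real r"
      have ct: "cmod (t - t0) = r" using r by (simp add: t_def)
      have et: "poly e t \<noteq> 0"
      proof
        assume "poly e t = 0"
        moreover have "t \<noteq> t0" using r(1) by (simp add: t_def)
        ultimately have "d3 \<le> dist t0 t" using d3(2) by blast
        then show False using ct r(4) by (simp add: dist_norm norm_minus_commute)
      qed
      have pt: "cmod (poly p t) > a / 2"
      proof -
        have "cmod (poly p t - poly p t0) < a / 2" using d1(2) ct r(2) by simp
        moreover have "cmod (poly p t0) - cmod (poly p t) \<le> cmod (poly p t0 - poly p t)"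
          by (rule norm_triangle_ineq2)
        moreover have "cmod (poly p t0 - poly p t) = cmod (poly p t - poly p t0)"
          by (rule norm_minus_commute)
        ultimately show ?thesis unfolding a_def by linarith
      qed
      have etb: "cmod (poly e t) < b" using d2(2)[of t] ct r(3) t0 by simp
      have "cmod (poly p t / poly e t) \<le> M" using eM(2)[of t] ct r et by simp
      moreover have "cmod (poly p t / poly e t) > \<bar>M\<bar>"
      proof -
        have "cmod (poly p t / poly e t) = cmod (poly p t) / cmod (poly e t)" by (simp add: norm_divide)
        moreover have "cmod (poly p t) / cmod (poly e t) > (a/2) / b"
        proof -
          have "(a/2) / b < cmod (poly p t) / b" using pt b by (intro divide_strict_right_mono) auto
          also have "\<dots> \<le> cmod (poly p t) / cmod (poly e t)"
            using etb et b by (intro divide_left_mono) auto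
          finally show ?thesis .
        qed
        moreover have "(a/2) / b = \<bar>M\<bar> + 1" using a by (simp add: b_def field_simps)
        ultimately show ?thesis by simp
      qed
      ultimately show False by simp
    qed
    then obtain p' where p': "p = [:-t0, 1:] * p'" using poly_eq_0_iff_dvd by (metis dvdE)
    obtain e' where e': "e = [:-t0, 1:] * e'" using t0 poly_eq_0_iff_dvd by (metis dvdE)
    have e'0: "e' \<noteq> 0" using e' less(2) by auto
    have deg: "degree e' < degree e" using e' e'0 degree_mult_eq[of "[:-t0, 1:]" e'] by (simp del: mult_pCons_left)
    have "e' dvd p'"
    proof (rule less(1)[OF deg e'0])
      fix t1 assume t1: "poly e' t1 = 0"
      then have "poly e t1 = 0" using e' by simp
      then obtain \<epsilon>1 M1 where eM1: "\<epsilon>1 > 0" "\<And>t. 0 < cmod (t - t1) \<Longrightarrow> cmod (t - t1) < \<epsilon>1 \<Longrightarrow> poly e t \<noteq> 0 \<Longrightarrow>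
          cmod (poly p t / poly e t) \<le> M1" using less(3) by blast
      define \<epsilon>2 where "\<epsilon>2 = (if t1 = t0 then \<epsilon>1 else min \<epsilon>1 (cmod (t1 - t0)))"
      have "\<epsilon>2 > 0" using eM1(1) by (auto simp: \<epsilon>2_def)
      moreover have "cmod (poly p' t / poly e' t) \<le> M1"
        if "0 < cmod (t - t1)" "cmod (t - t1) < \<epsilon>2" "poly e' t \<noteq> 0" for t
      proof -
        have "t \<noteq> t0"
        proof
          assume "t = t0"
          then show False using that(1,2) by (auto simp: \<epsilon>2_def split: if_splits simp: norm_minus_commute)
        qed
        then have "poly e t \<noteq> 0" using e' that(3) by simp
        moreover have "cmod (t - t1) < \<epsilon>1" using that(2) by (auto simp: \<epsilon>2_def split: if_splits)
        ultimately have "cmod (poly p t / poly e t) \<le> M1" using eM1(2) that(1) by blast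
        moreover have "poly p t / poly e t = poly p' t / poly e' t"
        proof -
          have "poly p t = (t - t0) * poly p' t" unfolding p' poly_mult by simp
          moreover have "poly e t = (t - t0) * poly e' t" unfolding e' poly_mult by simp
          ultimately show ?thesis using \<open>t \<noteq> t0\<close> by simp
        qed
        ultimately show ?thesis by simp
      qed
      ultimately show "\<exists>\<epsilon>>0. \<exists>M. \<forall>t. 0 < cmod (t - t1) \<and> cmod (t - t1) < \<epsilon> \<and> poly e' t \<noteq> 0 \<longrightarrow>
               cmod (poly p' t / poly e' t) \<le> M" by blast
    qed
    then show ?thesis unfolding e' p' by (rule mult_dvd_mono[OF dvd_refl])
  qed
qed

lemma coeff_bound_roots:
  fixes p :: "complex poly"
  assumes "lead_coeff p = 1" "\<And>z. poly p z = 0 \<Longrightarrow> cmod z \<le> L" "L \<ge> 0"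
  shows "cmod (coeff p n) \<le> (1 + L) ^ degree p"
  using assms(1,2)
proof (induction "degree p" arbitrary: p n rule: less_induct)
  case less
  show ?case
  proof (cases "degree p = 0")
    case True
    then have "p = [:1:]" using less(2) degree_0_id[OF True] by simp
    then show ?thesis by (cases n) (auto simp: coeff_pCons split: nat.split)
  next
    case False
    then obtain z where z: "poly p z = 0" using poly_root_exists by blast
    then obtain p' where p': "p = [:-z, 1:] * p'" using poly_eq_0_iff_dvd by (metis dvdE)
    have p'0: "p' \<noteq> 0" using p' less(2) by auto
    have deg: "degree p = Suc (degree p')" using p' p'0 degree_mult_eq[of "[:-z, 1:]" p'] by (simp del: mult_pCons_left)
    have lc: "lead_coeff p' = 1" using less(2) p' lead_coeff_mult[of "[:-z, 1:]" p'] by (simp del: mult_pCons_left)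
    have rt: "cmod w \<le> L" if "poly p' w = 0" for w using less(3)[of w] p' that by simp
    have IH: "cmod (coeff p' m) \<le> (1 + L) ^ degree p'" for m
      using less(1)[of p' m] deg lc rt by simp
    have cz: "cmod z \<le> L" using less(3)[OF z] .
    have "coeff p n = - z * coeff p' n + (case n of 0 \<Rightarrow> 0 | Suc m \<Rightarrow> coeff p' m)"
      using p' by (simp add: coeff_pCons split: nat.split)
    also have "cmod \<dots> \<le> L * (1 + L) ^ degree p' + (1 + L) ^ degree p'"
    proof -
      have "cmod (- z * coeff p' n) \<le> L * (1 + L) ^ degree p'"
        unfolding norm_mult norm_minus_cancel by (rule mult_mono[OF cz IH assms(3) norm_ge_zero])
      moreover have "cmod (case n of 0 \<Rightarrow> 0 | Suc m \<Rightarrow> coeff p' m) \<le> (1 + L) ^ degree p'"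
        using IH assms(3) by (auto split: nat.split)
      ultimately show ?thesis by (meson add_mono norm_triangle_le)
    qed
    also have "\<dots> = (1 + L) ^ degree p" using deg by (simp add: algebra_simps)
    finally show ?thesis .
  qed
qed

lemma compact_bound:
  fixes f :: "'a::metric_space \<Rightarrow> real"
  assumes "compact S" "continuous_on S f"
  shows "\<exists>A. \<forall>s\<in>S. f s \<le> A"
proof -
  have "bounded (f ` S)" by (rule compact_imp_bounded[OF compact_continuous_image[OF assms(2,1)]])
  then obtain A where "\<forall>y\<in>f ` S. norm y \<le> A" by (auto simp: bounded_iff)
  then show ?thesis by (metis abs_le_D1 image_eqI real_norm_def)
qed

lemma sum_rev_index: "(\<Sum>n<k. g n) = (\<Sum>i\<in>{1..k}. g (k - i))" for k :: nat
  by (rule sum.reindex_bij_witness[of _ "\<lambda>i. k - i" "\<lambda>n. k - n"]) auto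

lemma lin_factor_sum:
  fixes S :: "'a::comm_ring_1 poly"
  assumes "degree S < k"
  shows "(\<Sum>n\<le>k. coeff ([:-\<mu>, 1:] * S) n * f n) =
         (\<Sum>n\<le>k. coeff S n * f (Suc n)) - \<mu> * (\<Sum>n\<le>k. coeff S n * f n)"
proof -
  obtain k' where k: "k = Suc k'" using assms by (cases k) auto
  have c: "coeff ([:-\<mu>, 1:] * S) n = - \<mu> * coeff S n + (case n of 0 \<Rightarrow> 0 | Suc m \<Rightarrow> coeff S m)" for n
    by (simp add: coeff_pCons split: nat.split)
  have "(\<Sum>n\<le>k. coeff ([:-\<mu>, 1:] * S) n * f n) =
        (\<Sum>n\<le>k. (case n of 0 \<Rightarrow> 0 | Suc m \<Rightarrow> coeff S m) * f n) - \<mu> * (\<Sum>n\<le>k. coeff S n * f n)"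
  proof -
    have "(\<Sum>n\<le>k. coeff ([:-\<mu>, 1:] * S) n * f n) =
          (\<Sum>n\<le>k. (case n of 0 \<Rightarrow> 0 | Suc m \<Rightarrow> coeff S m) * f n - \<mu> * (coeff S n * f n))"
      unfolding c by (rule sum.cong) (auto simp: algebra_simps)
    also have "\<dots> = (\<Sum>n\<le>k. (case n of 0 \<Rightarrow> 0 | Suc m \<Rightarrow> coeff S m) * f n) - \<mu> * (\<Sum>n\<le>k. coeff S n * f n)"
      by (simp add: sum_subtractf sum_distrib_left)
    finally show ?thesis .
  qed
  moreover have "(\<Sum>n\<le>k. (case n of 0 \<Rightarrow> 0 | Suc m \<Rightarrow> coeff S m) * f n) = (\<Sum>n\<le>k'. coeff S n * f (Suc n))"
    unfolding k sum.atMost_Suc_shift by simp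
  moreover have "(\<Sum>n\<le>k. coeff S n * f (Suc n)) = (\<Sum>n\<le>k'. coeff S n * f (Suc n))"
    unfolding k using assms k by (simp add: coeff_eq_0)
  ultimately show ?thesis by simp
qed

lemma sum_atMost_last: "(\<Sum>n\<le>k. f n) = f k + (\<Sum>n<k. f n)" for k :: nat
  by (simp add: lessThan_Suc_atMost[symmetric] add.commute)

lemma core:
  fixes \<rho> :: "nat \<Rightarrow> 'b \<Rightarrow> complex poly" and e G :: "complex poly" and \<pi> :: "nat \<Rightarrow> complex poly"
  assumes B: "finite B" and k: "k \<ge> 1" and e0: "e \<noteq> 0"
    and rec: "\<And>j b. b \<in> B \<Longrightarrow> e * \<rho> (k + j) b + (\<Sum>i=1..k. \<pi> i * \<rho> (k + j - i) b) = 0"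
    and G0: "G \<noteq> 0"
    and Gind: "\<And>t c. poly G t \<noteq> 0 \<Longrightarrow> (\<forall>b\<in>B. (\<Sum>l<k. c l * poly (\<rho> l b) t) = 0) \<Longrightarrow> (\<forall>l<k. c l = 0)"
    and i: "i \<in> {1..k}"
  shows "e dvd \<pi> i"
proof (rule bounded_ratio_dvd[OF e0])
  fix t0 :: complex
  have fin: "finite {z. poly (e * G) z = 0}" using e0 G0 by (intro poly_roots_finite) simp
  obtain d where d: "d > 0" "\<And>z. z \<in> {z. poly (e * G) z = 0} \<Longrightarrow> z \<noteq> t0 \<Longrightarrow> d \<le> dist t0 z"
    using finite_set_avoid[OF fin, of t0] by blast
  define \<epsilon> where "\<epsilon> = d / 2"
  have \<epsilon>: "\<epsilon> > 0" using d by (simp add: \<epsilon>_def)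
  have nz: "poly e t \<noteq> 0 \<and> poly G t \<noteq> 0" if "0 < cmod (t - t0)" "cmod (t - t0) \<le> \<epsilon>" for t
  proof -
    have "t \<noteq> t0" using that(1) by auto
    moreover have "\<not> d \<le> dist t0 t" using that(2) d(1) by (simp add: \<epsilon>_def dist_norm norm_minus_commute)
    ultimately have "poly (e * G) t \<noteq> 0" using d(2) by blast
    then show ?thesis by simp
  qed
  define a where "a i t = poly (\<pi> i) t / poly e t" for i t
  have recpt: "poly (\<rho> (k + j) b) t = - (\<Sum>i=1..k. a i t * poly (\<rho> (k + j - i) b) t)"
    if "b \<in> B" "poly e t \<noteq> 0" for j b t
  proof -
    have "poly (e * \<rho> (k + j) b + (\<Sum>i=1..k. \<pi> i * \<rho> (k + j - i) b)) t = 0" using rec[OF that(1)] by simp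
    then have "poly e t * poly (\<rho> (k + j) b) t = - (\<Sum>i=1..k. poly (\<pi> i) t * poly (\<rho> (k + j - i) b) t)"
      by (simp add: poly_sum eq_neg_iff_add_eq_0)
    then have "poly (\<rho> (k + j) b) t = - (\<Sum>i=1..k. poly (\<pi> i) t * poly (\<rho> (k + j - i) b) t) / poly e t"
      using that(2) by (simp add: field_simps)
    also have "\<dots> = - (\<Sum>i=1..k. a i t * poly (\<rho> (k + j - i) b) t)"
      by (simp add: a_def sum_divide_distrib)
    finally show ?thesis .
  qed
  define Sph where "Sph = sphere t0 \<epsilon>"
  have eSph: "poly e s \<noteq> 0" if "s \<in> Sph" for s
  proof -
    have "cmod (s - t0) = \<epsilon>" using that by (simp add: Sph_def dist_norm norm_minus_commute)
    then show ?thesis using nz[of s] \<epsilon> by simp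
  qed
  have cSph: "compact Sph" by (simp add: Sph_def)
  obtain A where A: "\<And>s. s \<in> Sph \<Longrightarrow> (\<Sum>i=1..k. cmod (a i s)) \<le> A"
  proof -
    have "continuous_on Sph (\<lambda>s. \<Sum>i=1..k. cmod (poly (\<pi> i) s / poly e s))"
      by (intro continuous_intros) (use eSph in auto)
    then show ?thesis using compact_bound[OF cSph] that unfolding a_def by blast
  qed
  obtain K0 where K0: "\<And>s. s \<in> Sph \<Longrightarrow> (\<Sum>l<k. \<Sum>b\<in>B. cmod (poly (\<rho> l b) s)) \<le> K0"
  proof -
    have "continuous_on Sph (\<lambda>s. \<Sum>l<k. \<Sum>b\<in>B. cmod (poly (\<rho> l b) s))"
      by (intro continuous_intros)
    then show ?thesis using compact_bound[OF cSph] that by blast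
  qed
  define K where "K = max K0 0"
  define L where "L = max 1 A"
  have K: "K \<ge> 0" "K0 \<le> K" and L: "L \<ge> 1" "A \<le> L" by (auto simp: K_def L_def)
  have grow: "\<forall>b\<in>B. \<forall>s\<in>Sph. cmod (poly (\<rho> j b) s) \<le> K * L ^ j" for j
  proof (induction j rule: less_induct)
    case (less j)
    show ?case
    proof (intro ballI)
      fix b s assume b: "b \<in> B" and s: "s \<in> Sph"
      show "cmod (poly (\<rho> j b) s) \<le> K * L ^ j"
      proof (cases "j < k")
        case True
        have "cmod (poly (\<rho> j b) s) \<le> (\<Sum>b\<in>B. cmod (poly (\<rho> j b) s))"
          using b B by (intro member_le_sum) auto
        also have "\<dots> \<le> (\<Sum>l<k. \<Sum>b\<in>B. cmod (poly (\<rho> l b) s))"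
          using True by (intro member_le_sum[where f = "\<lambda>l. \<Sum>b\<in>B. cmod (poly (\<rho> l b) s)"]) (auto intro: sum_nonneg)
        also have "\<dots> \<le> K" using K0[OF s] K by simp
        also have "\<dots> \<le> K * L ^ j" using K L by (simp add: mult_le_cancel_left1 one_le_power)
        finally show ?thesis .
      next
        case False
        define j' where "j' = j - k"
        have jj: "j = k + j'" using False by (simp add: j'_def)
        have "cmod (poly (\<rho> j b) s) = cmod (\<Sum>i=1..k. a i s * poly (\<rho> (k + j' - i) b) s)"
          using recpt[OF b eSph[OF s], of j'] jj by (simp add: norm_minus_cancel)
        also have "\<dots> \<le> (\<Sum>i=1..k. cmod (a i s) * cmod (poly (\<rho> (k + j' - i) b) s))"
          by (rule order.trans[OF norm_sum]) (simp add: norm_mult)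
        also have "\<dots> \<le> (\<Sum>i=1..k. cmod (a i s) * (K * L ^ (j - 1)))"
        proof (rule sum_mono)
          fix i assume i: "i \<in> {1..k}"
          have lt: "k + j' - i < j" using i jj by auto
          have "cmod (poly (\<rho> (k + j' - i) b) s) \<le> K * L ^ (k + j' - i)" using less[OF lt] b s by blast
          also have "\<dots> \<le> K * L ^ (j - 1)"
            using K L i jj by (intro mult_left_mono power_increasing) auto
          finally show "cmod (a i s) * cmod (poly (\<rho> (k + j' - i) b) s) \<le> cmod (a i s) * (K * L ^ (j - 1))"
            by (simp add: mult_left_mono)
        qed
        also have "\<dots> = (\<Sum>i=1..k. cmod (a i s)) * (K * L ^ (j - 1))" by (simp add: sum_distrib_right)
        also have "\<dots> \<le> L * (K * L ^ (j - 1))"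
          using A[OF s] L K by (intro mult_right_mono) auto
        also have "\<dots> = K * L ^ j"
        proof -
          have "j \<noteq> 0" using jj k by simp
          then obtain j0 where "j = Suc j0" using not0_implies_Suc by blast
          then show ?thesis by (simp only: diff_Suc_1 power_Suc mult.left_commute)
        qed
        finally show ?thesis .
      qed
    qed
  qed
  have inball: "cmod (poly (\<rho> j b) t) \<le> K * L ^ j" if "b \<in> B" "t \<in> ball t0 \<epsilon>" for j b t
  proof (rule maximum_modulus_frontier[where S = "ball t0 \<epsilon>" and f = "\<lambda>t. poly (\<rho> j b) t"])
    show "(\<lambda>t. poly (\<rho> j b) t) holomorphic_on interior (ball t0 \<epsilon>)" by (intro holomorphic_intros)
    show "continuous_on (closure (ball t0 \<epsilon>)) (\<lambda>t. poly (\<rho> j b) t)" by (intro continuous_intros)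
    show "bounded (ball t0 \<epsilon>)" by simp
    fix z assume "z \<in> frontier (ball t0 \<epsilon>)"
    then have "z \<in> Sph" using \<epsilon> by (simp add: Sph_def)
    then show "cmod (poly (\<rho> j b) z) \<le> K * L ^ j" using grow that(1) by blast
  qed (use that in auto)
  have bound: "cmod (poly (\<pi> i) t / poly e t) \<le> (1 + L) ^ k"
    if t: "0 < cmod (t - t0) \<and> cmod (t - t0) < \<epsilon> \<and> poly e t \<noteq> 0" for t
  proof -
    have et: "poly e t \<noteq> 0" and Gt: "poly G t \<noteq> 0" using nz[of t] t by auto
    have tb: "t \<in> ball t0 \<epsilon>" using t by (simp add: dist_norm norm_minus_commute)
    define Pt where "Pt = monom 1 k + (\<Sum>i\<in>{1..k}. monom (a i t) (k - i))"
    have cPt: "coeff Pt n = (if n = k then 1 else if n < k then a (k - n) t else 0)" for n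
    proof -
      have "coeff Pt n = (if k = n then 1 else 0) + (\<Sum>i\<in>{1..k}. if k - i = n then a i t else 0)"
        by (simp add: Pt_def coeff_sum coeff_monom)
      also have "(\<Sum>i\<in>{1..k}. if k - i = n then a i t else 0) = (if n < k then a (k - n) t else 0)"
      proof (cases "n < k")
        case True
        have "(\<Sum>i\<in>{1..k}. if k - i = n then a i t else 0) = (\<Sum>i\<in>{1..k}. if i = k - n then a i t else 0)"
          by (rule sum.cong) auto
        also have "\<dots> = a (k - n) t" using True by (simp add: sum.delta)
        finally show ?thesis using True by simp
      next
        case False
        then show ?thesis by (intro trans[OF sum.neutral]) auto
      qed
      finally show ?thesis by auto
    qed
    have dPt: "degree Pt = k"
    proof -
      have "degree Pt \<le> k" by (rule degree_le) (simp add: cPt)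
      moreover have "k \<le> degree Pt" by (rule le_degree) (simp add: cPt)
      ultimately show ?thesis by simp
    qed
    have lcPt: "lead_coeff Pt = 1" using dPt cPt by simp
    have recPt: "(\<Sum>n\<le>k. coeff Pt n * poly (\<rho> (n + j) b) t) = 0" if b: "b \<in> B" for j b
    proof -
      have "(\<Sum>n\<le>k. coeff Pt n * poly (\<rho> (n + j) b) t) =
            poly (\<rho> (k + j) b) t + (\<Sum>n<k. coeff Pt n * poly (\<rho> (n + j) b) t)"
        by (simp add: sum_atMost_last cPt add.commute)
      also have "(\<Sum>n<k. coeff Pt n * poly (\<rho> (n + j) b) t) = (\<Sum>i\<in>{1..k}. coeff Pt (k - i) * poly (\<rho> (k - i + j) b) t)"
        by (rule sum_rev_index)
      also have "\<dots> = (\<Sum>i\<in>{1..k}. a i t * poly (\<rho> (k + j - i) b) t)"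
        by (rule sum.cong) (auto simp: cPt)
      finally show ?thesis using recpt[OF b et, of j] by simp
    qed
    have roots: "cmod \<mu> \<le> L" if mu: "poly Pt \<mu> = 0" for \<mu>
    proof -
      have "[:-\<mu>, 1:] dvd Pt" using mu by (simp add: poly_eq_0_iff_dvd)
      then obtain S where S: "Pt = [:-\<mu>, 1:] * S" by (rule dvdE)
      have S0: "S \<noteq> 0"
      proof
        assume "S = 0"
        then have "Pt = 0" using S by simp
        then show False using lcPt by simp
      qed
      have dS: "degree S < k" using S S0 dPt degree_mult_eq[of "[:-\<mu>, 1:]" S] by (simp del: mult_pCons_left)
      define w where "w j b = (\<Sum>n\<le>k. coeff S n * poly (\<rho> (n + j) b) t)" for j b
      have wS: "w (Suc j) b = \<mu> * w j b" if b: "b \<in> B" for j b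
      proof -
        have "0 = (\<Sum>n\<le>k. coeff Pt n * poly (\<rho> (n + j) b) t)" using recPt[OF b] by simp
        also have "\<dots> = (\<Sum>n\<le>k. coeff S n * poly (\<rho> (Suc n + j) b) t) - \<mu> * w j b"
          unfolding S w_def by (rule lin_factor_sum[OF dS])
        also have "(\<Sum>n\<le>k. coeff S n * poly (\<rho> (Suc n + j) b) t) = w (Suc j) b"
          by (simp add: w_def)
        finally show ?thesis by simp
      qed
      have wp: "w j b = \<mu> ^ j * w 0 b" if b: "b \<in> B" for j b
        by (induction j) (auto simp: wS[OF b])
      obtain b where b: "b \<in> B" "w 0 b \<noteq> 0"
      proof (rule ccontr)
        assume "\<not> thesis"
        then have w0: "\<forall>b\<in>B. w 0 b = 0" using that by blast
        have "\<forall>b\<in>B. (\<Sum>l<k. coeff S l * poly (\<rho> l b) t) = 0"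
        proof
          fix b assume "b \<in> B"
          then have "w 0 b = 0" using w0 by blast
          then show "(\<Sum>l<k. coeff S l * poly (\<rho> l b) t) = 0"
            unfolding w_def using dS by (simp add: sum_atMost_last coeff_eq_0)
        qed
        then have "\<forall>l<k. coeff S l = 0" using Gind[OF Gt] by blast
        then have "S = 0" using dS by (metis coeff_eq_0 leading_coeff_0_iff)
        then show False using S0 by simp
      qed
      define K2 where "K2 = (\<Sum>n\<le>k. cmod (coeff S n) * (K * L ^ n))"
      have wb: "cmod (\<mu>) ^ j * cmod (w 0 b) \<le> K2 * L ^ j" for j
      proof -
        have wj: "w j b = \<mu> ^ j * w 0 b" by (rule wp[OF b(1)])
        have "cmod (\<mu>) ^ j * cmod (w 0 b) = cmod (w j b)" unfolding wj by (simp add: norm_mult norm_power)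
        also have "\<dots> \<le> (\<Sum>n\<le>k. cmod (coeff S n) * cmod (poly (\<rho> (n + j) b) t))"
          unfolding w_def by (rule order.trans[OF norm_sum]) (simp add: norm_mult)
        also have "\<dots> \<le> (\<Sum>n\<le>k. cmod (coeff S n) * (K * L ^ (n + j)))"
          using inball[OF b(1) tb] by (intro sum_mono mult_left_mono) auto
        also have "\<dots> = K2 * L ^ j" unfolding K2_def sum_distrib_right by (rule sum.cong) (simp_all add: power_add mult_ac)
        finally show ?thesis .
      qed
      show ?thesis
      proof (rule ccontr)
        assume "\<not> cmod \<mu> \<le> L"
        then have r: "cmod \<mu> / L > 1" using L by simp
        obtain j where j: "K2 / cmod (w 0 b) < (cmod \<mu> / L) ^ j" using real_arch_pow[OF r] by blast
        have wpos: "cmod (w 0 b) > 0" using b(2) by simp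
        have Lp: "L ^ j > 0" using L by simp
        have "K2 < (cmod \<mu> / L) ^ j * cmod (w 0 b)" using j wpos by (simp add: pos_divide_less_eq)
        then have "K2 * L ^ j < (cmod \<mu> / L) ^ j * L ^ j * cmod (w 0 b)"
          using Lp by (simp add: algebra_simps)
        also have "(cmod \<mu> / L) ^ j * L ^ j = cmod \<mu> ^ j" using L by (simp add: power_divide)
        finally show False using wb[of j] by simp
      qed
    qed
    have "cmod (coeff Pt (k - i)) \<le> (1 + L) ^ degree Pt"
      by (rule coeff_bound_roots[OF lcPt roots]) (use L in auto)
    moreover have "coeff Pt (k - i) = a i t"
    proof -
      have "k - i \<noteq> k" "k - i < k" "k - (k - i) = i" using i k by auto
      then show ?thesis by (simp add: cPt)
    qed
    ultimately show "cmod (poly (\<pi> i) t / poly e t) \<le> (1 + L) ^ k" using dPt by (simp add: a_def)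
  qed
  show "\<exists>\<epsilon>>0. \<exists>M. \<forall>t. 0 < cmod (t - t0) \<and> cmod (t - t0) < \<epsilon> \<and> poly e t \<noteq> 0 \<longrightarrow>
          cmod (poly (\<pi> i) t / poly e t) \<le> M"
    using bound \<epsilon> by blast
qed

section \<open>Matrices\<close>

lemma mat_vec_row: "l < k \<Longrightarrow> (mat k k f *\<^sub>v vec k c) $ l = (\<Sum>m<k. f (l, m) * c m)"
  by (simp add: scalar_prod_def atLeast0LessThan)

lemma det_nz_inj:
  fixes f :: "nat \<times> nat \<Rightarrow> 'a::idom"
  assumes "det (mat k k f) \<noteq> 0" "\<And>l. l < k \<Longrightarrow> (\<Sum>m<k. f (l, m) * c m) = 0"
  shows "\<forall>l<k. c l = 0"
proof -
  have "mat k k f *\<^sub>v vec k c = 0\<^sub>v k"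
  proof (rule eq_vecI)
    fix i assume "i < dim_vec (0\<^sub>v k :: 'a vec)"
    then have i: "i < k" by simp
    show "(mat k k f *\<^sub>v vec k c) $ i = (0\<^sub>v k :: 'a vec) $ i"
      using i by (simp only: mat_vec_row[OF i] assms(2)[OF i] index_zero_vec(1))
  qed simp
  moreover have "mat k k f \<in> carrier_mat k k" by simp
  moreover have vc: "vec k c \<in> carrier_vec k" by simp
  ultimately have "vec k c = 0\<^sub>v k"
  proof -
    assume mv: "mat k k f *\<^sub>v vec k c = 0\<^sub>v k" and cm: "mat k k f \<in> carrier_mat k k" and vc: "vec k c \<in> carrier_vec k"
    have nex: "\<not> (\<exists>v. v \<in> carrier_vec k \<and> v \<noteq> 0\<^sub>v k \<and> mat k k f *\<^sub>v v = 0\<^sub>v k)"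
      using det_0_iff_vec_prod_zero[OF cm] assms(1) by simp
    show ?thesis
    proof (rule ccontr)
      assume "vec k c \<noteq> 0\<^sub>v k"
      then have "\<exists>v. v \<in> carrier_vec k \<and> v \<noteq> 0\<^sub>v k \<and> mat k k f *\<^sub>v v = 0\<^sub>v k"
        using mv vc by (intro exI[of _ "vec k c"]) simp
      then show False using nex by simp
    qed
  qed
  then show ?thesis by (metis index_vec index_zero_vec(1))
qed

lemma gram_nonzero:
  fixes u :: "nat \<Rightarrow> 'w::euclidean_space"
  assumes ind: "\<And>c. (\<Sum>l<k. c l *\<^sub>R u l) = 0 \<Longrightarrow> \<forall>l<k. c l = 0"
  shows "det (mat k k (\<lambda>(l, m). u l \<bullet> u m)) \<noteq> 0"
proof
  assume d0: "det (mat k k (\<lambda>(l, m). u l \<bullet> u m)) = 0"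
  have "mat k k (\<lambda>(l, m). u l \<bullet> u m) \<in> carrier_mat k k" by simp
  then obtain v where v: "v \<in> carrier_vec k" "v \<noteq> 0\<^sub>v k" "mat k k (\<lambda>(l, m). u l \<bullet> u m) *\<^sub>v v = 0\<^sub>v k"
    using det_0_iff_vec_prod_zero d0 by blast
  define c where "c l = v $ l" for l
  have vc: "v = vec k c" using v(1) by (auto simp: c_def)
  define w where "w = (\<Sum>m<k. c m *\<^sub>R u m)"
  have row: "u l \<bullet> w = 0" if "l < k" for l
  proof -
    have z: "(mat k k (\<lambda>(l, m). u l \<bullet> u m) *\<^sub>v vec k c) $ l = 0" using v(3) vc that by simp
    have "(mat k k (\<lambda>(l, m). u l \<bullet> u m) *\<^sub>v vec k c) $ l = (\<Sum>m<k. (\<lambda>(l, m). u l \<bullet> u m) (l, m) * c m)"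
      by (rule mat_vec_row[OF that])
    then have "(\<Sum>m<k. (u l \<bullet> u m) * c m) = 0" using z by simp
    then show ?thesis by (simp add: w_def inner_sum_right mult.commute)
  qed
  have "w \<bullet> w = (\<Sum>l<k. c l * (u l \<bullet> w))" by (simp add: w_def inner_sum_left)
  also have "\<dots> = 0" using row by simp
  finally have "w = 0" by simp
  then have "(\<Sum>l<k. c l *\<^sub>R u l) = 0" by (simp add: w_def)
  then have "\<forall>l<k. c l = 0" by (rule ind)
  then have "v = 0\<^sub>v k" using vc by auto
  then show False using v(2) by simp
qed

lemma polyfun_inner2:
  fixes F H :: "'v::euclidean_space \<Rightarrow> 'w::euclidean_space"
  assumes "polyfun_vec F" "polyfun_vec H"
  shows "polyfun (\<lambda>y. F y \<bullet> H y)"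
proof -
  have "polyfun (\<lambda>y. (F y \<bullet> b) * (H y \<bullet> b))" if b: "b \<in> Basis" for b
  proof -
    have "polyfun (\<lambda>x. F x \<bullet> b)" using assms(1) b unfolding polyfun_vec_def by blast
    moreover have "polyfun (\<lambda>x. H x \<bullet> b)" using assms(2) b unfolding polyfun_vec_def by blast
    ultimately show ?thesis by (rule polyfun.mult)
  qed
  then have "polyfun (\<lambda>y. \<Sum>b\<in>Basis. (F y \<bullet> b) * (H y \<bullet> b))" by (rule polyfun_sum)
  moreover have "(\<lambda>y. F y \<bullet> H y) = (\<lambda>y. \<Sum>b\<in>Basis. (F y \<bullet> b) * (H y \<bullet> b))"
    by (rule ext) (rule euclidean_inner)
  ultimately show ?thesis by simp
qed

lemma gram_polyfun:
  fixes R :: "nat \<Rightarrow> 'v::euclidean_space \<Rightarrow> 'w::euclidean_space"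
  assumes "\<And>i. polyfun_vec (R i)"
  shows "polyfun (\<lambda>y. det (mat k k (\<lambda>(l, m). R l y \<bullet> R m y)))"
proof -
  have "polyfun (\<lambda>y. \<Sum>p\<in>{p. p permutes {0..<k}}. signof p * (\<Prod>l = 0..<k. R l y \<bullet> R (p l) y))"
    by (intro polyfun_sum polyfun_scale polyfun_prod polyfun_inner2 assms)
  moreover have "det (mat k k (\<lambda>(l, m). R l y \<bullet> R m y)) =
     (\<Sum>p\<in>{p. p permutes {0..<k}}. signof p * (\<Prod>l = 0..<k. R l y \<bullet> R (p l) y))" for y
  proof -
    have "det (mat k k (\<lambda>(l, m). R l y \<bullet> R m y)) =
      (\<Sum>p\<in>{p. p permutes {0..<k}}. signof p * (\<Prod>l = 0..<k. mat k k (\<lambda>(l, m). R l y \<bullet> R m y) $$ (l, p l)))"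
      by (rule det_def') simp
    also have "\<dots> = (\<Sum>p\<in>{p. p permutes {0..<k}}. signof p * (\<Prod>l = 0..<k. R l y \<bullet> R (p l) y))"
    proof (rule sum.cong[OF refl])
      fix p assume p: "p \<in> {p. p permutes {0..<k}}"
      have "(\<Prod>l = 0..<k. mat k k (\<lambda>(l, m). R l y \<bullet> R m y) $$ (l, p l)) = (\<Prod>l = 0..<k. R l y \<bullet> R (p l) y)"
      proof (rule prod.cong[OF refl])
        fix l assume l: "l \<in> {0..<k}"
        then have "p l < k" using p permutes_in_image by fastforce
        then show "mat k k (\<lambda>(l, m). R l y \<bullet> R m y) $$ (l, p l) = R l y \<bullet> R (p l) y" using l by simp
      qed
      then show "signof p * (\<Prod>l = 0..<k. mat k k (\<lambda>(l, m). R l y \<bullet> R m y) $$ (l, p l)) =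
                 signof p * (\<Prod>l = 0..<k. R l y \<bullet> R (p l) y)" by simp
    qed
    finally show ?thesis .
  qed
  ultimately show ?thesis by simp
qed

lemma line_gram:
  fixes \<rho> :: "nat \<Rightarrow> 'b \<Rightarrow> complex poly"
  assumes "poly (det (mat k k (\<lambda>(l, m). \<Sum>b\<in>B. \<rho> l b * \<rho> m b))) t \<noteq> 0"
    and "\<forall>b\<in>B. (\<Sum>l<k. c l * poly (\<rho> l b) t) = 0"
  shows "\<forall>l<k. c l = 0"
proof (rule det_nz_inj)
  let ?M = "mat k k (\<lambda>(l, m). \<Sum>b\<in>B. \<rho> l b * \<rho> m b)"
  have "poly (det ?M) t = det (map_mat (\<lambda>p. poly p t) ?M)"
    by (simp add: comm_ring_hom.hom_det[OF poly_hom.comm_ring_hom_axioms])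
  also have "map_mat (\<lambda>p. poly p t) ?M = mat k k (\<lambda>(l, m). \<Sum>b\<in>B. poly (\<rho> l b) t * poly (\<rho> m b) t)"
    by (rule eq_matI) (auto simp: poly_sum)
  finally show "det (mat k k (\<lambda>(l, m). \<Sum>b\<in>B. poly (\<rho> l b) t * poly (\<rho> m b) t)) \<noteq> 0"
    using assms(1) by simp
  fix l assume "l < k"
  have "(\<Sum>m<k. (\<Sum>b\<in>B. poly (\<rho> l b) t * poly (\<rho> m b) t) * c m) =
        (\<Sum>b\<in>B. poly (\<rho> l b) t * (\<Sum>m<k. c m * poly (\<rho> m b) t))"
  proof -
    have "(\<Sum>m<k. (\<Sum>b\<in>B. poly (\<rho> l b) t * poly (\<rho> m b) t) * c m) =
          (\<Sum>m<k. \<Sum>b\<in>B. poly (\<rho> l b) t * (c m * poly (\<rho> m b) t))"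
      by (simp add: sum_distrib_left sum_distrib_right mult_ac)
    also have "\<dots> = (\<Sum>b\<in>B. \<Sum>m<k. poly (\<rho> l b) t * (c m * poly (\<rho> m b) t))"
      by (rule sum.swap)
    also have "\<dots> = (\<Sum>b\<in>B. poly (\<rho> l b) t * (\<Sum>m<k. c m * poly (\<rho> m b) t))"
      by (simp add: sum_distrib_left)
    finally show ?thesis .
  qed
  also have "\<dots> = 0" using assms(2) by simp
  finally show "(\<Sum>m<k. (case (l, m) of (l, m) \<Rightarrow> \<Sum>b\<in>B. poly (\<rho> l b) t * poly (\<rho> m b) t) * c m) = 0"
    by simp
qed

section \<open>Kernel\<close>

lemma Eval_le:
  fixes R :: "nat \<Rightarrow> 'v::euclidean_space \<Rightarrow> 'w::euclidean_space"
  assumes "degree c \<le> N"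
  shows "Eval R c x = (\<Sum>i\<le>N. coeff c i x *\<^sub>R R i x)"
  unfolding Eval_def
  by (rule sum.mono_neutral_left) (use assms in \<open>auto simp: coeff_eq_0\<close>)

lemma kern_shift:
  fixes R :: "nat \<Rightarrow> 'v::euclidean_space \<Rightarrow> 'w::euclidean_space"
  assumes ideal: "is_ideal_PVlam (Kern_Eval R)" and c: "c \<in> Kern_Eval R" and N: "degree c \<le> N"
  shows "(\<Sum>n\<le>N. coeff c n x *\<^sub>R R (n + j) x) = 0"
proof -
  have m: "monom 1 j \<in> PVlam" unfolding PVlam_def
    by (auto simp: coeff_monom polyfun_zero one_fun_def polyfun.const)
  have "monom 1 j * c \<in> Kern_Eval R" using ideal c m unfolding is_ideal_PVlam_def by blast
  then have ev: "Eval R (monom 1 j * c) x = 0" unfolding Kern_Eval_def by simp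
  have dg: "degree (monom 1 j * c) \<le> j + N"
  proof -
    have "degree (monom (1::'v\<Rightarrow>real) j) \<le> j" by (rule degree_monom_le)
    then show ?thesis using degree_mult_le[of "monom (1::'v\<Rightarrow>real) j" c] N by linarith
  qed
  define g where "g n = coeff (monom 1 j * c) n x *\<^sub>R R n x" for n
  have "0 = (\<Sum>n\<le>j + N. g n)" using ev Eval_le[OF dg, of R x] by (simp add: g_def)
  also have "\<dots> = (\<Sum>n\<in>(\<lambda>m. m + j) ` {..N}. g n)"
  proof (rule sum.mono_neutral_right)
    show "\<forall>n\<in>{..j + N} - (\<lambda>m. m + j) ` {..N}. g n = 0"
    proof
      fix n assume n: "n \<in> {..j + N} - (\<lambda>m. m + j) ` {..N}"
      have "n < j"
      proof (rule ccontr)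
        assume "\<not> n < j"
        then have "n = (n - j) + j" "n - j \<le> N" using n by auto
        then show False using n by blast
      qed
      then show "g n = 0" by (simp add: g_def coeff_monom_mult)
    qed
  qed auto
  also have "\<dots> = (\<Sum>m\<le>N. g (m + j))" by (simp add: sum.reindex inj_on_def)
  also have "\<dots> = (\<Sum>n\<le>N. coeff c n x *\<^sub>R R (n + j) x)"
    by (simp add: g_def coeff_monom_mult)
  finally show ?thesis by simp
qed

lemma poly_det_mat: "poly (det (mat k k f)) t = det (mat k k (\<lambda>lm. poly (f lm) t))"
proof -
  have "poly (det (mat k k f)) t = det (map_mat (\<lambda>p. poly p t) (mat k k f))"
    by (simp add: comm_ring_hom.hom_det[OF poly_hom.comm_ring_hom_axioms])
  also have "map_mat (\<lambda>p. poly p t) (mat k k f) = mat k k (\<lambda>lm. poly (f lm) t)"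
    by (rule eq_matI) auto
  finally show ?thesis .
qed

lemma det_of_real_mat: "det (mat k k (\<lambda>lm. complex_of_real (f lm))) = of_real (det (mat k k f))"
proof -
  have "of_real (det (mat k k f)) = det (map_mat complex_of_real (mat k k f))"
    by (simp add: comm_ring_hom.hom_det[OF of_real_hom.comm_ring_hom_axioms])
  also have "map_mat complex_of_real (mat k k f) = mat k k (\<lambda>lm. complex_of_real (f lm))"
    by (rule eq_matI) auto
  finally show ?thesis by simp
qed

theorem mainTheorem7:
  fixes R :: "nat \<Rightarrow> 'v::euclidean_space \<Rightarrow> 'w::euclidean_space"
    and a :: "nat \<Rightarrow> 'v \<Rightarrow> real"
    and k :: nat
  assumes R_poly: "\<And>i. polyfun_vec (R i)"
    and k_def: "k = (LEAST j. A_set j R = UNIV)"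
    and a_rat: "\<And>i. i \<in> {1..k} \<Longrightarrow> ratfun (a i)"
    and a_rel: "ratfun_eq (R k) (\<lambda>x. - (\<Sum>i=1..k. a i x *\<^sub>R R (k - i) x))"
    and ideal: "is_ideal_PVlam (Kern_Eval R)"
  shows "\<forall>i\<in>{1..k}. \<exists>p. polyfun p \<and> ratfun_eq (a i) p"
proof (intro ballI)
  fix i0 assume i0: "i0 \<in> {1..k}"
  then have k1: "k \<ge> 1" by auto
  have "k - 1 < (LEAST j. A_set j R = UNIV)" using k1 k_def by simp
  then have "\<not> (A_set (k - 1) R = UNIV)" by (rule not_less_Least)
  then obtain X where X: "X \<notin> A_set (k - 1) R" by auto
  have km: "{..k - 1} = {..<k}" using k1 by auto
  have indX: "\<forall>l<k. c l = 0" if c: "(\<Sum>l<k. c l *\<^sub>R R l X) = 0" for c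
  proof (rule ccontr)
    assume "\<not> (\<forall>l<k. c l = 0)"
    then obtain l where l: "l < k" "c l \<noteq> 0" by blast
    then have "\<exists>i\<le>k - 1. c i \<noteq> 0" by (intro exI[of _ l]) auto
    moreover have "(\<Sum>i\<le>k - 1. c i *\<^sub>R R i X) = 0" using c km by simp
    ultimately have "X \<in> A_set (k - 1) R" unfolding A_set_def by blast
    then show False using X by simp
  qed
  define \<delta> where "\<delta> = (\<lambda>y. det (mat k k (\<lambda>(l, m). R l y \<bullet> R m y)))"
  have \<delta>pf: "polyfun \<delta>" unfolding \<delta>_def by (rule gram_polyfun[OF R_poly])
  have \<delta>X: "\<delta> X \<noteq> 0" unfolding \<delta>_def by (rule gram_nonzero) (rule indX)
  have "\<forall>i. \<exists>pq. i \<in> {1..k} \<longrightarrow> (polyfun (fst pq) \<and> polyfun (snd pq) \<and> snd pq \<noteq> (\<lambda>_. 0) \<and>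
          (\<forall>x. snd pq x \<noteq> 0 \<longrightarrow> a i x = fst pq x / snd pq x))"
  proof
    fix i
    show "\<exists>pq. i \<in> {1..k} \<longrightarrow> (polyfun (fst pq) \<and> polyfun (snd pq) \<and> snd pq \<noteq> (\<lambda>_. 0) \<and>
          (\<forall>x. snd pq x \<noteq> 0 \<longrightarrow> a i x = fst pq x / snd pq x))"
    proof (cases "i \<in> {1..k}")
      case True
      then obtain p q where "polyfun p" "polyfun q" "q \<noteq> (\<lambda>_. 0)" "\<forall>x. q x \<noteq> 0 \<longrightarrow> a i x = p x / q x"
        using a_rat[OF True] unfolding ratfun_def by blast
      then show ?thesis by (intro exI[of _ "(p, q)"]) simp
    next
      case False
      then show ?thesis by blast
    qed
  qed
  from choice[OF this] obtain pq where pq: "\<And>i. i \<in> {1..k} \<Longrightarrow> polyfun (fst (pq i)) \<and> polyfun (snd (pq i)) \<and>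
      snd (pq i) \<noteq> (\<lambda>_. 0) \<and> (\<forall>x. snd (pq i) x \<noteq> 0 \<longrightarrow> a i x = fst (pq i) x / snd (pq i) x)" by blast
  define P where "P i = fst (pq i)" for i
  define Q where "Q i = snd (pq i)" for i
  have Ppf: "\<And>i. i \<in> {1..k} \<Longrightarrow> polyfun (P i)" and Qpf: "\<And>i. i \<in> {1..k} \<Longrightarrow> polyfun (Q i)"
    and Qnz: "\<And>i. i \<in> {1..k} \<Longrightarrow> Q i \<noteq> (\<lambda>_. 0)"
    and aPQ: "\<And>i x. i \<in> {1..k} \<Longrightarrow> Q i x \<noteq> 0 \<Longrightarrow> a i x = P i x / Q i x"
    using pq unfolding P_def Q_def by auto
  obtain q0 where q0: "polyfun q0" "q0 \<noteq> (\<lambda>_. 0)"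
    "\<And>x. q0 x \<noteq> 0 \<Longrightarrow> R k x = - (\<Sum>i=1..k. a i x *\<^sub>R R (k - i) x)"
    using a_rel unfolding ratfun_eq_def by blast
  define E where "E = (\<lambda>y. \<Prod>i\<in>{1..k}. Q i y)"
  define pp where "pp = (\<lambda>i y. P i y * (\<Prod>j\<in>{1..k} - {i}. Q j y))"
  have Epf: "polyfun E" unfolding E_def by (rule polyfun_prod) (rule Qpf)
  have Enz: "E \<noteq> (\<lambda>_. 0)" unfolding E_def by (rule polyfun_prod_nonzero) (simp_all add: Qpf Qnz)
  have ppf: "polyfun (pp i)" if "i \<in> {1..k}" for i
    unfolding pp_def using that by (intro polyfun.mult Ppf polyfun_prod Qpf) auto
  have EQ: "E y = Q i y * (\<Prod>j\<in>{1..k} - {i}. Q j y)" if "i \<in> {1..k}" for i y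
    unfolding E_def using that by (simp add: prod.remove)
  have pQ: "pp i y * Q i y = P i y * E y" if "i \<in> {1..k}" for i y
    using EQ[OF that, of y] by (simp add: pp_def mult_ac)
  have Ea: "E y * a i y = pp i y" if i: "i \<in> {1..k}" and Ey: "E y \<noteq> 0" for i y
  proof -
    have Qy: "Q i y \<noteq> 0" using EQ[OF i, of y] Ey by auto
    have "E y * a i y = Q i y * (\<Prod>j\<in>{1..k} - {i}. Q j y) * (P i y / Q i y)"
      using EQ[OF i, of y] aPQ[OF i Qy] by simp
    also have "\<dots> = pp i y" using Qy by (simp add: pp_def field_simps)
    finally show ?thesis .
  qed
  define F where "F = (\<lambda>y. E y *\<^sub>R R k y + (\<Sum>i=1..k. pp i y *\<^sub>R R (k - i) y))"
  have Fz: "F y = 0" for y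
  proof -
    have "F y \<bullet> b = 0" if b: "b \<in> Basis" for b
    proof (rule polyfun_zero_ext[where q = "\<lambda>y. q0 y * E y"])
      have eqF: "(\<lambda>y. F y \<bullet> b) = (\<lambda>y. E y * (R k y \<bullet> b) + (\<Sum>i=1..k. pp i y * (R (k - i) y \<bullet> b)))"
        by (simp add: F_def inner_add_left inner_sum_left)
      show "polyfun (\<lambda>y. F y \<bullet> b)" unfolding eqF
        by (intro polyfun.add polyfun.mult Epf polyfun_inner R_poly polyfun_sum ppf) auto
      show "polyfun (\<lambda>y. q0 y * E y)" by (intro polyfun.mult q0(1) Epf)
      show "(\<lambda>y. q0 y * E y) \<noteq> (\<lambda>_. 0)" by (rule polyfun_mult_nonzero[OF q0(1) Epf q0(2) Enz])
    next
      fix x assume "q0 x * E x \<noteq> 0"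
      then have qx: "q0 x \<noteq> 0" and Ex: "E x \<noteq> 0" by auto
      have "F x = E x *\<^sub>R (- (\<Sum>i=1..k. a i x *\<^sub>R R (k - i) x)) + (\<Sum>i=1..k. pp i x *\<^sub>R R (k - i) x)"
        unfolding F_def using q0(3)[OF qx] by simp
      also have "\<dots> = - (\<Sum>i=1..k. (E x * a i x) *\<^sub>R R (k - i) x) + (\<Sum>i=1..k. pp i x *\<^sub>R R (k - i) x)"
        by (simp add: scaleR_sum_right)
      also have "(\<Sum>i=1..k. (E x * a i x) *\<^sub>R R (k - i) x) = (\<Sum>i=1..k. pp i x *\<^sub>R R (k - i) x)"
        by (rule sum.cong) (auto simp: Ea[OF _ Ex])
      finally show "F x \<bullet> b = 0" by simp
    qed
    then show "F y = 0" by (simp add: euclidean_eq_iff[of "F y" 0])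
  qed
  define cf where "cf n = (if n = k then E else if n < k then pp (k - n) else 0)" for n
  define c0 where "c0 = Abs_poly cf"
  have cc0: "coeff c0 = cf" unfolding c0_def by (rule coeff_Abs_poly[of k]) (simp add: cf_def)
  have c0P: "c0 \<in> PVlam" unfolding PVlam_def
  proof (intro allI CollectI)
    fix n show "polyfun (coeff c0 n)" unfolding cc0
      by (cases "n = k"; cases "n < k") (auto simp: cf_def Epf polyfun_zero intro!: ppf)
  qed
  have dc0: "degree c0 \<le> k" by (rule degree_le) (simp add: cc0 cf_def)
  have reidx: "(\<Sum>n\<le>k. cf n y *\<^sub>R R (n + j) y) = E y *\<^sub>R R (k + j) y + (\<Sum>i=1..k. pp i y *\<^sub>R R (k + j - i) y)"
    for j y
  proof -
    have "(\<Sum>n\<le>k. cf n y *\<^sub>R R (n + j) y) = cf k y *\<^sub>R R (k + j) y + (\<Sum>n<k. cf n y *\<^sub>R R (n + j) y)"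
      by (rule sum_atMost_last)
    also have "(\<Sum>n<k. cf n y *\<^sub>R R (n + j) y) = (\<Sum>i\<in>{1..k}. cf (k - i) y *\<^sub>R R (k - i + j) y)"
      by (rule sum_rev_index)
    also have "\<dots> = (\<Sum>i=1..k. pp i y *\<^sub>R R (k + j - i) y)"
    proof (rule sum.cong[OF refl])
      fix i assume "i \<in> {1..k}"
      then have "k - i \<noteq> k" "k - i < k" "k - (k - i) = i" "k - i + j = k + j - i" by auto
      then show "cf (k - i) y *\<^sub>R R (k - i + j) y = pp i y *\<^sub>R R (k + j - i) y" by (simp add: cf_def)
    qed
    finally show ?thesis by (simp add: cf_def)
  qed
  have c0K: "c0 \<in> Kern_Eval R"
  proof -
    have "Eval R c0 x = 0" for x
    proof -
      have "Eval R c0 x = (\<Sum>n\<le>k. cf n x *\<^sub>R R (n + 0) x)" using Eval_le[OF dc0, of R x] by (simp add: cc0)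
      also have "\<dots> = F x" unfolding reidx F_def by simp
      finally show ?thesis using Fz by simp
    qed
    then show ?thesis unfolding Kern_Eval_def using c0P by auto
  qed
  have shift: "E y *\<^sub>R R (k + j) y + (\<Sum>i=1..k. pp i y *\<^sub>R R (k + j - i) y) = 0" for j y
    using kern_shift[OF ideal c0K dc0, of y j] unfolding cc0 reidx .
  define \<delta>' where "\<delta>' = (\<lambda>y. \<delta> y * E y)"
  have \<delta>'pf: "polyfun \<delta>'" unfolding \<delta>'_def by (intro polyfun.mult \<delta>pf Epf)
  have \<delta>nz: "\<delta> \<noteq> (\<lambda>_. 0)" using \<delta>X by auto
  have \<delta>'nz: "\<delta>' \<noteq> (\<lambda>_. 0)" unfolding \<delta>'_def by (rule polyfun_mult_nonzero[OF \<delta>pf Epf \<delta>nz Enz])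
  have lineH: "map_poly complex_of_real Ql dvd map_poly complex_of_real Pl"
    if dx: "\<delta>' x \<noteq> 0" and Pl: "\<forall>t. P i0 (x + t *\<^sub>R v) = poly Pl t" and Ql: "\<forall>t. Q i0 (x + t *\<^sub>R v) = poly Ql t"
    for x v Pl Ql
  proof -
    have dxx: "\<delta> x \<noteq> 0" "E x \<noteq> 0" using dx by (auto simp: \<delta>'_def)
    have "\<forall>lb. \<exists>r. \<forall>t. R (fst lb) (x + t *\<^sub>R v) \<bullet> snd lb = poly r t"
    proof
      fix lb :: "nat \<times> 'w"
      show "\<exists>r. \<forall>t. R (fst lb) (x + t *\<^sub>R v) \<bullet> snd lb = poly r t"
        by (rule line_poly[OF polyfun_inner[OF R_poly]])
    qed
    from choice[OF this] obtain \<rho>' where \<rho>': "\<forall>lb t. R (fst lb) (x + t *\<^sub>R v) \<bullet> snd lb = poly (\<rho>' lb) t"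
      by blast
    define \<rho> where "\<rho> l b = \<rho>' (l, b)" for l b
    have \<rho>: "R l (x + t *\<^sub>R v) \<bullet> b = poly (\<rho> l b) t" for l b t
      using \<rho>' unfolding \<rho>_def by (metis fst_conv snd_conv)
    obtain el where el: "\<forall>t. E (x + t *\<^sub>R v) = poly el t" using line_poly[OF Epf, of x v] by blast
    have "\<forall>i. \<exists>r. i \<in> {1..k} \<longrightarrow> (\<forall>t. pp i (x + t *\<^sub>R v) = poly r t)"
    proof
      fix i
      show "\<exists>r. i \<in> {1..k} \<longrightarrow> (\<forall>t. pp i (x + t *\<^sub>R v) = poly r t)"
      proof (cases "i \<in> {1..k}")
        case True
        then show ?thesis using line_poly[OF ppf[OF True], of x v] by blast
      next
        case False
        then show ?thesis by blast
      qed
    qed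
    from choice[OF this] obtain \<pi>l where \<pi>l: "\<forall>i. i \<in> {1..k} \<longrightarrow> (\<forall>t. pp i (x + t *\<^sub>R v) = poly (\<pi>l i) t)"
      by blast
    have \<pi>lt: "poly (\<pi>l i) t = pp i (x + t *\<^sub>R v)" if "i \<in> {1..k}" for i t
      using \<pi>l that by simp
    have r1: "el * \<rho> (k + j) b + (\<Sum>i=1..k. \<pi>l i * \<rho> (k + j - i) b) = 0" if b: "b \<in> Basis" for j b
    proof (rule poly_ext)
      fix t
      define y where "y = x + t *\<^sub>R v"
      have "poly (el * \<rho> (k + j) b + (\<Sum>i=1..k. \<pi>l i * \<rho> (k + j - i) b)) t =
            E y * (R (k + j) y \<bullet> b) + (\<Sum>i=1..k. pp i y * (R (k + j - i) y \<bullet> b))"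
      proof -
        have e1: "poly el t = E y" using el by (simp add: y_def)
        have e2: "poly (\<rho> l b) t = R l y \<bullet> b" for l using \<rho>[of l t b] by (simp add: y_def)
        have e3: "(\<Sum>i=1..k. poly (\<pi>l i) t * (R (k + j - i) y \<bullet> b)) = (\<Sum>i=1..k. pp i y * (R (k + j - i) y \<bullet> b))"
          by (rule sum.cong[OF refl]) (simp add: \<pi>lt y_def)
        show ?thesis using e3 by (simp add: poly_sum e1 e2)
      qed
      also have "\<dots> = (E y *\<^sub>R R (k + j) y + (\<Sum>i=1..k. pp i y *\<^sub>R R (k + j - i) y)) \<bullet> b"
        by (simp add: inner_add_left inner_sum_left)
      also have "\<dots> = 0" using shift[of y j] by simp
      finally show "poly (el * \<rho> (k + j) b + (\<Sum>i=1..k. \<pi>l i * \<rho> (k + j - i) b)) t = poly 0 t" by simp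
    qed
    have r2: "\<pi>l i0 * Ql = Pl * el"
    proof (rule poly_ext)
      fix t
      show "poly (\<pi>l i0 * Ql) t = poly (Pl * el) t"
        using \<pi>lt[OF i0, of t] Pl Ql el pQ[OF i0, of "x + t *\<^sub>R v"] by simp
    qed
    have el0: "el \<noteq> 0"
    proof
      assume "el = 0"
      then have "E (x + 0 *\<^sub>R v) = 0" using el[rule_format, of 0] by simp
      then show False using dxx(2) by simp
    qed
    let ?m = "map_poly complex_of_real"
    define \<rho>c where "\<rho>c l b = ?m (\<rho> l b)" for l b
    define \<pi>c where "\<pi>c i = ?m (\<pi>l i)" for i
    have rc: "?m el * \<rho>c (k + j) b + (\<Sum>i=1..k. \<pi>c i * \<rho>c (k + j - i) b) = 0" if "b \<in> Basis" for j b
    proof -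
      have "?m (el * \<rho> (k + j) b + (\<Sum>i=1..k. \<pi>l i * \<rho> (k + j - i) b)) = 0" using r1[OF that] by simp
      then show ?thesis by (simp add: \<rho>c_def \<pi>c_def ofr.hom_add ofr.hom_mult ofr.hom_sum)
    qed
    define G where "G = det (mat k k (\<lambda>(l, m). \<Sum>b\<in>Basis. \<rho>c l b * \<rho>c m b))"
    have Gind: "\<forall>l<k. c l = 0" if "poly G t \<noteq> 0" "\<forall>b\<in>Basis. (\<Sum>l<k. c l * poly (\<rho>c l b) t) = 0" for t c
      using line_gram[where k = k and B = Basis and \<rho> = \<rho>c and t = t and c = c] that unfolding G_def by blast
    have p0: "poly (\<rho>c l b) 0 = complex_of_real (R l x \<bullet> b)" for l b
    proof -
      have "poly (\<rho>c l b) 0 = complex_of_real (poly (\<rho> l b) 0)"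
        by (simp add: \<rho>c_def poly_0_coeff_0 coeff_map_poly)
      also have "poly (\<rho> l b) 0 = R l x \<bullet> b" using \<rho>[of l 0 b] by simp
      finally show ?thesis .
    qed
    have G0: "G \<noteq> 0"
    proof
      assume "G = 0"
      then have z: "poly G 0 = 0" by simp
      have "poly G 0 = det (mat k k (\<lambda>lm. poly ((\<lambda>(l, m). \<Sum>b\<in>Basis. \<rho>c l b * \<rho>c m b) lm) 0))"
        unfolding G_def by (rule poly_det_mat)
      also have "(\<lambda>lm. poly ((\<lambda>(l, m). \<Sum>b\<in>Basis. \<rho>c l b * \<rho>c m b) lm) 0) =
                 (\<lambda>lm. complex_of_real ((\<lambda>(l, m). R l x \<bullet> R m x) lm))"
      proof (rule ext)
        fix lm :: "nat \<times> nat"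
        obtain l m where lm: "lm = (l, m)" by (cases lm)
        have "poly (\<Sum>b\<in>Basis. \<rho>c l b * \<rho>c m b) 0 = (\<Sum>b\<in>Basis. complex_of_real ((R l x \<bullet> b) * (R m x \<bullet> b)))"
          by (simp add: poly_sum p0)
        also have "\<dots> = complex_of_real (\<Sum>b\<in>Basis. (R l x \<bullet> b) * (R m x \<bullet> b))" by simp
        also have "(\<Sum>b\<in>Basis. (R l x \<bullet> b) * (R m x \<bullet> b)) = R l x \<bullet> R m x"
          by (rule euclidean_inner[symmetric])
        finally show "poly ((\<lambda>(l, m). \<Sum>b\<in>Basis. \<rho>c l b * \<rho>c m b) lm) 0 =
                 complex_of_real ((\<lambda>(l, m). R l x \<bullet> R m x) lm)" by (simp add: lm)
      qed
      also have "det (mat k k (\<lambda>lm. complex_of_real ((\<lambda>(l, m). R l x \<bullet> R m x) lm))) = complex_of_real (\<delta> x)"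
        unfolding \<delta>_def by (rule det_of_real_mat)
      finally show False using z dxx(1) by simp
    qed
    have mel: "?m el \<noteq> 0" using el0 by simp
    have "?m el dvd \<pi>c i0"
    proof (rule core[where B = Basis and k = k and e = "?m el" and \<rho> = \<rho>c and \<pi> = \<pi>c and G = G and i = i0])
      show "\<And>j b. b \<in> Basis \<Longrightarrow> ?m el * \<rho>c (k + j) b + (\<Sum>i=1..k. \<pi>c i * \<rho>c (k + j - i) b) = 0"
        by (rule rc)
      show "\<And>t c. poly G t \<noteq> 0 \<Longrightarrow> (\<forall>b\<in>Basis. (\<Sum>l<k. c l * poly (\<rho>c l b) t) = 0) \<Longrightarrow> (\<forall>l<k. c l = 0)"
        by (rule Gind)
    qed (use k1 mel G0 i0 in auto)
    then obtain h where h: "\<pi>c i0 = ?m el * h" by (rule dvdE)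
    have "?m (\<pi>l i0 * Ql) = ?m (Pl * el)" using r2 by simp
    then have "\<pi>c i0 * ?m Ql = ?m Pl * ?m el" by (simp add: \<pi>c_def ofr.hom_mult)
    then have "?m el * (h * ?m Ql) = ?m el * ?m Pl" using h by (simp add: mult_ac)
    then have "h * ?m Ql = ?m Pl" using mel by simp
    then show ?thesis by (metis dvd_triv_right)
  qed
  have "\<exists>g. polyfun g \<and> (\<forall>y. P i0 y = Q i0 y * g y)"
    apply (rule line_div_global[OF Ppf[OF i0] Qpf[OF i0] Qnz[OF i0] \<delta>'pf \<delta>'nz])
    apply (rule lineH)
      apply assumption+
    done
  then obtain g where g: "polyfun g" "\<forall>y. P i0 y = Q i0 y * g y" by blast
  have "ratfun_eq (a i0) g"
    unfolding ratfun_eq_def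
  proof (intro exI[of _ "Q i0"] conjI allI impI)
    fix x assume "Q i0 x \<noteq> 0"
    then show "a i0 x = g x" using aPQ[OF i0] g(2) by simp
  qed (use Qpf[OF i0] Qnz[OF i0] in auto)
  then show "\<exists>p. polyfun p \<and> ratfun_eq (a i0) p" using g(1) by blast
qed

end
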